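(* Consider $\min_{x\in X}f(x)$, $f(x)=\mathbb{E}[F(x,\xi)]$, with $F:\mathcal{D}\times\Omega\to\mathbb{R}$, $\mathcal{D}\subseteq\mathbb{R}^n$ open, $X\subset\mathcal{D}$ nonempty closed convex, $F(\cdot,\xi)$ convex on $\mathcal{D}$ for all $\xi$, $\mathbb{E}[F(x,\xi)]$ finite on $\mathcal{D}$. Let $f$ be differentiable over $X$ with $L$-Lipschitz gradient ($L>0$) and strongly convex with constant $\eta>0$, with unique minimizer $x^*$. Let $\{x_k\}$ be generated by $x_{k+1}=\Pi_X(x_k-\gamma_k^*(\nabla f(x_k)+w_k))$, $w_k=\nabla_xF(x_k,\xi_k)-\nabla f(x_k)$, where $\mathbb{E}[\|w_k\|^2\mid\mathcal{F}_k]\le\nu^2$ a.s. for all $k$, and $\gamma_0^*=\frac{\eta}{2\nu^2}e_0$, $\gamma_k^*=\gamma_{k-1}^*(1-\frac\eta2\gamma_{k-1}^* )$ ($k\ge1$), with $e_0=\mathbb{E}[\|x_0-x^*\|^2]$. If $\frac{\eta}{2\nu^2}\mathbb{E}[\|x_0-x^*\|^2]<\frac1L$, then $\{x_k\}$ converges almost surely to $x^*$.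
   Context: $\Pi_X$ is Euclidean projection; $x_0\in X$ random with $\mathbb{E}\|x_0\|^2<\infty$; $\xi_k$ samples of $\xi$; $\mathcal{F}_k=\{x_0,\xi_0,\dots,\xi_{k-1}\}$; $\mathbb{E}[w_k\mid\mathcal{F}_k]=0$. *)

theory Defs
  imports "HOL-Analysis.Analysis" "HOL-Probability.Probability"
begin

text \<open>Strong convexity with modulus eta on a set X (standard convention:
  f - (eta/2) norm^2 is convex).\<close>
definition strongly_convex_on :: "'v::real_normed_vector set \<Rightarrow> ('v \<Rightarrow> real) \<Rightarrow> real \<Rightarrow> bool" where
  "strongly_convex_on X f eta \<longleftrightarrow>
     (\<forall>x\<in>X. \<forall>y\<in>X. \<forall>t::real. 0 \<le> t \<and> t \<le> 1 \<longrightarrow>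
        f ((1 - t) *\<^sub>R x + t *\<^sub>R y)
          \<le> (1 - t) * f x + t * f y - eta / 2 * t * (1 - t) * (norm (x - y))\<^sup>2)"

fun gamma_star :: "real \<Rightarrow> real \<Rightarrow> real \<Rightarrow> nat \<Rightarrow> real" where
  "gamma_star eta nu e0 0 = eta / (2 * nu\<^sup>2) * e0"
| "gamma_star eta nu e0 (Suc k) =
     gamma_star eta nu e0 k * (1 - eta / 2 * gamma_star eta nu e0 k)"

definition history :: "'a measure \<Rightarrow> ('a \<Rightarrow> 'v::topological_space) \<Rightarrow> 's measure
      \<Rightarrow> (nat \<Rightarrow> 'a \<Rightarrow> 's) \<Rightarrow> nat \<Rightarrow> 'a measure" where
  "history M x0 S xi k = sigma (space M)
     ({x0 -` A \<inter> space M | A. A \<in> sets borel}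
      \<union> {xi i -` B \<inter> space M | i B. i < k \<and> B \<in> sets S})"

end

theory Submission
  imports Defs
begin
lemma step_aux: fixes a c :: real assumes "0 \<le> a" "c*a \<le> 1" "0 \<le> c"
  shows "0 \<le> a * (1 - c*a)" "a * (1 - c*a) \<le> a"
proof -
  show "0 \<le> a * (1 - c*a)" using assms by simp
  have "0 \<le> c * a * a" using assms by simp
  then show "a * (1 - c*a) \<le> a" by (simp add: algebra_simps)
qed

lemma gs_basic0:
  assumes eta: "eta > 0" and g0: "0 \<le> gamma_star eta nu e0 0" "eta/2 * gamma_star eta nu e0 0 \<le> 1"
  shows "0 \<le> gamma_star eta nu e0 k \<and> gamma_star eta nu e0 k \<le> gamma_star eta nu e0 0"
proof (induction k)
  case 0
  show ?case using g0 by (simp del: gamma_star.simps)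
next
  case (Suc k)
  let ?g = "gamma_star eta nu e0"
  have b: "eta/2 * ?g k \<le> 1"
    using mult_left_mono[of "?g k" "?g 0" "eta/2"] Suc g0 eta by linarith
  show ?case using Suc b step_aux[of "?g k" "eta/2"] eta
    by (simp del: gamma_star.simps add: gamma_star.simps(2))
qed

lemma gs_basic:
  assumes eta: "eta > 0" and g0: "0 \<le> gamma_star eta nu e0 0" "eta/2 * gamma_star eta nu e0 0 \<le> 1"
  shows "0 \<le> gamma_star eta nu e0 k \<and> gamma_star eta nu e0 k \<le> gamma_star eta nu e0 0
      \<and> gamma_star eta nu e0 (Suc k) \<le> gamma_star eta nu e0 k"
proof -
  let ?g = "gamma_star eta nu e0"
  have a: "0 \<le> ?g k" "?g k \<le> ?g 0" using gs_basic0[OF assms] by auto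
  have b: "eta/2 * ?g k \<le> 1"
    using mult_left_mono[of "?g k" "?g 0" "eta/2"] a g0 eta by linarith
  show ?thesis using a b step_aux[of "?g k" "eta/2"] eta
    by (simp del: gamma_star.simps add: gamma_star.simps(2))
qed

lemma gs_pos:
  assumes eta: "eta > 0" and g0: "0 < gamma_star eta nu e0 0" "eta/2 * gamma_star eta nu e0 0 < 1"
  shows "0 < gamma_star eta nu e0 k"
proof (induction k)
  case 0 then show ?case using g0 by simp
next
  case (Suc k)
  let ?g = "gamma_star eta nu e0"
  have "?g k \<le> ?g 0" using gs_basic[OF eta] g0 by (meson less_eq_real_def)
  then have "eta/2 * ?g k \<le> eta/2 * ?g 0" using eta by (simp del: gamma_star.simps)
  then have "eta/2 * ?g k < 1" using g0 by linarith
  then show ?case using Suc by (simp del: gamma_star.simps add: gamma_star.simps(2))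
qed

lemma gs_lim:
  assumes eta: "eta > 0" and g0: "0 \<le> gamma_star eta nu e0 0" "eta/2 * gamma_star eta nu e0 0 \<le> 1"
  shows "gamma_star eta nu e0 \<longlonglongrightarrow> 0"
proof -
  let ?g = "gamma_star eta nu e0"
  have dec: "decseq ?g" using gs_basic[OF assms] by (simp add: decseq_SucI)
  have bdd: "\<And>k. 0 \<le> ?g k" using gs_basic[OF assms] by blast
  obtain l where l: "?g \<longlonglongrightarrow> l"
    using dec bdd by (metis decseq_convergent)
  have "(\<lambda>k. ?g (Suc k)) \<longlonglongrightarrow> l" using l by (rule LIMSEQ_Suc)
  moreover have "(\<lambda>k. ?g (Suc k)) \<longlonglongrightarrow> l * (1 - eta/2 * l)"
    unfolding gamma_star.simps(2) by (intro tendsto_intros l)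
  ultimately have "l = l * (1 - eta/2 * l)" using LIMSEQ_unique by blast
  then have "l = 0" using eta by (simp add: algebra_simps)
  then show ?thesis using l by simp
qed

lemma dmc: "(0::real) < b \<Longrightarrow> a / b * b = a" by simp

lemma e_step:
  fixes gam eta L nu eps e e' :: real
  assumes "0 < gam" "0 < eta" "0 \<le> e" "eta/2*gam \<le> 1"
    "e' \<le> (1 - 2*gam*eta + gam^2*L^2)*e + gam^2*nu^2"
    "gam*L^2 \<le> 3/2*eta" "gam*nu^2 \<le> eta/2*eps"
  shows "max (e' - eps) 0 \<le> (1 - eta/2*gam) * max (e - eps) 0"
proof -
  have a: "gam^2*L^2 * e \<le> (3/2*eta*gam) * e"
  proof -
    have "gam^2*L^2 = gam*(gam*L^2)" by (simp add: power2_eq_square)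
    also have "\<dots> \<le> gam*(3/2*eta)" using assms by (intro mult_left_mono) auto
    finally show ?thesis using assms by (intro mult_right_mono) (auto simp: algebra_simps)
  qed
  have b: "gam^2*nu^2 \<le> eta/2*gam*eps"
  proof -
    have "gam^2*nu^2 = gam*(gam*nu^2)" by (simp add: power2_eq_square)
    also have "\<dots> \<le> gam*(eta/2*eps)" using assms by (intro mult_left_mono) auto
    finally show ?thesis by (simp add: algebra_simps)
  qed
  have "e' \<le> (1 - eta/2*gam)*e + eta/2*gam*eps"
    using assms(5) a b by (simp add: algebra_simps)
  moreover have "(1 - eta/2*gam)*(e - eps) = (1 - eta/2*gam)*e + eta/2*gam*eps - eps"
    by (simp add: field_simps)
  ultimately have c: "e' - eps \<le> (1 - eta/2*gam)*(e - eps)" by linarith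
  have d: "0 \<le> 1 - eta/2*gam" using assms by simp
  have "(1 - eta/2*gam)*(e - eps) \<le> (1 - eta/2*gam) * max (e - eps) 0"
    using d by (intro mult_left_mono) auto
  moreover have "0 \<le> (1 - eta/2*gam) * max (e - eps) 0" using d by simp
  ultimately show ?thesis using c by linarith
qed

lemma e_lim:
  fixes e :: "nat \<Rightarrow> real"
  assumes eta: "eta > 0" and g0: "0 \<le> gamma_star eta nu e0 0" "eta/2 * gamma_star eta nu e0 0 < 1"
    and enn: "\<And>k. 0 \<le> e k"
    and rec: "\<And>k. e (Suc k) \<le> (1 - 2*gamma_star eta nu e0 k*eta + (gamma_star eta nu e0 k)^2*L^2)*e k
                 + (gamma_star eta nu e0 k)^2*nu^2"
    and zero: "gamma_star eta nu e0 0 = 0 \<Longrightarrow> e 0 = 0"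
  shows "e \<longlonglongrightarrow> 0"
proof (cases "gamma_star eta nu e0 0 = 0")
  case True
  let ?g = "gamma_star eta nu e0"
  have gz: "?g k = 0" for k using gs_basic[OF eta g0(1)] g0 True by (smt (verit))
  have "e k = 0" for k
  proof (induction k)
    case 0 then show ?case using zero True by simp
  next
    case (Suc k) then show ?case using rec[of k] gz[of k] enn[of "Suc k"] by simp
  qed
  then have "e = (\<lambda>_. 0)" by auto
  then show ?thesis by simp
next
  case False
  let ?g = "gamma_star eta nu e0"
  have gpos: "0 < ?g k" for k using gs_pos[OF eta] g0 False by (simp del: gamma_star.simps)
  have gb: "0 \<le> ?g k \<and> ?g k \<le> ?g 0" for k using gs_basic[OF eta g0(1)] g0 by auto
  have gc: "eta/2 * ?g k \<le> 1" for k
    using mult_left_mono[of "?g k" "?g 0" "eta/2"] gb[of k] g0 eta by linarith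
  have glim: "?g \<longlonglongrightarrow> 0" using gs_lim[OF eta g0(1)] g0 by simp
  show ?thesis
  proof (rule LIMSEQ_I)
    fix r :: real assume r: "0 < r"
    define eps where "eps = r/2"
    have eps: "0 < eps" using r eps_def by simp
    define del where "del = min (3/2*eta / (L^2+1)) (eta/2*eps/(nu^2+1))"
    have p1: "0 < L^2+1" "0 < nu^2+1" by (auto intro: add_nonneg_pos)
    have del: "0 < del" using eta eps p1 unfolding del_def by simp
    obtain K where K: "\<And>k. k \<ge> K \<Longrightarrow> ?g k < del"
      using glim del by (metis LIMSEQ_D diff_zero gb real_norm_def abs_of_nonneg)
    have K1: "?g k * L^2 \<le> 3/2*eta" if "k \<ge> K" for k
    proof -
      have "?g k * L^2 \<le> ?g k * (L^2+1)" using gb[of k] by (intro mult_left_mono) auto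
      also have "\<dots> \<le> 3/2*eta / (L^2+1) * (L^2+1)"
        using K[OF that] gb[of k] by (intro mult_right_mono) (auto simp: del_def add_pos_nonneg)
      also have "\<dots> = 3/2*eta" by (rule dmc) (use p1 in auto)
      finally show ?thesis .
    qed
    have K2: "?g k * nu^2 \<le> eta/2*eps" if "k \<ge> K" for k
    proof -
      have "?g k * nu^2 \<le> ?g k * (nu^2+1)" using gb[of k] by (intro mult_left_mono) auto
      also have "\<dots> \<le> eta/2*eps/(nu^2+1) * (nu^2+1)"
        using K[OF that] gb[of k] by (intro mult_right_mono) (auto simp: del_def add_pos_nonneg)
      also have "\<dots> = eta/2*eps" by (rule dmc) (use p1 in auto)
      finally show ?thesis .
    qed
    define d where "d k = max (e k - eps) 0" for k
    have dstep: "d (Suc k) \<le> (1 - eta/2 * ?g k) * d k" if "k \<ge> K" for k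
      unfolding d_def
      by (rule e_step[OF gpos eta enn gc rec K1[OF that] K2[OF that]])
    have dK: "d (K + m) \<le> d K * ?g (K+m) / ?g K" for m
    proof (induction m)
      case 0 then show ?case using gpos[of K] by simp
    next
      case (Suc m)
      have "d (K + Suc m) \<le> (1 - eta/2 * ?g (K+m)) * d (K+m)"
        using dstep[of "K+m"] by simp
      also have "\<dots> \<le> (1 - eta/2 * ?g (K+m)) * (d K * ?g (K+m) / ?g K)"
        using Suc gc[of "K+m"] by (intro mult_left_mono) auto
      also have "\<dots> = d K * ?g (K + Suc m) / ?g K"
        by (simp del: gamma_star.simps add: gamma_star.simps(2) algebra_simps)
      finally show ?case .
    qed
    have "(\<lambda>n. d K * ?g n / ?g K) \<longlonglongrightarrow> d K * 0 / ?g K"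
      using gpos[of K] by (intro tendsto_intros glim) auto
    then have "(\<lambda>n. d K * ?g n / ?g K) \<longlonglongrightarrow> 0" by simp
    from LIMSEQ_D[OF this eps] obtain N where N: "\<And>n. n \<ge> N \<Longrightarrow> norm (d K * ?g n / ?g K - 0) < eps"
      by blast
    show "\<exists>no. \<forall>n\<ge>no. norm (e n - 0) < r"
    proof (intro exI allI impI)
      fix n assume n: "n \<ge> max K N"
      then obtain m where m: "n = K + m" by (metis le_Suc_ex max.boundedE)
      have "d n \<le> d K * ?g n / ?g K" using dK[of m] m by simp
      also have "\<dots> < eps" using N[of n] n abs_ge_self[of "d K * ?g n / ?g K"] by (simp only: real_norm_def diff_zero) linarith
      finally have "e n < 2*eps" unfolding d_def by simp
      then show "norm (e n - 0) < r" using enn[of n] eps_def by simp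
    qed
  qed
qed

lemma ind_bound:
  fixes M :: "'a measure" and f :: "'a \<Rightarrow> real"
  assumes M: "prob_space M" and S: "S \<in> sets M" and ge: "\<And>\<omega>. \<omega> \<in> S \<Longrightarrow> eps \<le> f \<omega>"
    and nn: "\<And>\<omega>. \<omega> \<in> space M \<Longrightarrow> 0 \<le> f \<omega>" and int: "integrable M f" and eps: "0 \<le> eps"
  shows "eps * measure M S \<le> (\<integral>\<omega>. indicator S \<omega> * f \<omega> \<partial>M)"
proof -
  interpret prob_space M by (rule M)
  have "eps * measure M S = (\<integral>\<omega>. eps * indicator S \<omega> \<partial>M)"
    using S by (simp add: Int_absorb2 sets.sets_into_space)
  also have "\<dots> \<le> (\<integral>\<omega>. indicator S \<omega> * f \<omega> \<partial>M)"
  proof (rule integral_mono)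
    show "integrable M (\<lambda>\<omega>. eps * indicator S \<omega>)"
      using S by (intro integrable_mult_right integrable_real_indicator) (auto simp: less_top[symmetric])
    show "integrable M (\<lambda>\<omega>. indicator S \<omega> * f \<omega>)"
      using integrable_mult_indicator[OF S int] by simp
    fix \<omega> assume "\<omega> \<in> space M"
    then show "eps * indicator S \<omega> \<le> indicator S \<omega> * f \<omega>"
      using nn[of \<omega>] ge[of \<omega>] eps by (auto split: split_indicator)
  qed
  finally show ?thesis .
qed

lemma ville_finite:
  fixes M :: "'a measure" and H :: "nat \<Rightarrow> 'a measure" and W :: "nat \<Rightarrow> 'a \<Rightarrow> real"
  assumes M: "prob_space M"
    and sub: "\<And>k. subalgebra M (H k)"
    and mono: "\<And>k. sets (H k) \<subseteq> sets (H (Suc k))"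
    and meas: "\<And>k. W k \<in> borel_measurable (H k)"
    and nn: "\<And>k \<omega>. \<omega> \<in> space M \<Longrightarrow> 0 \<le> W k \<omega>"
    and int: "\<And>k. integrable M (W k)"
    and sup: "\<And>k B. k \<ge> K \<Longrightarrow> B \<in> sets (H k) \<Longrightarrow>
        (\<integral>\<omega>. indicator B \<omega> * W (Suc k) \<omega> \<partial>M) \<le> (\<integral>\<omega>. indicator B \<omega> * W k \<omega> \<partial>M)"
    and eps: "0 < eps"
    and jK: "K \<le> j" and jn: "j \<le> n"
  shows "\<forall>B\<in>sets (H j). eps * measure M (B \<inter> {\<omega>\<in>space M. \<exists>i. j \<le> i \<and> i \<le> n \<and> eps \<le> W i \<omega>})
           \<le> (\<integral>\<omega>. indicator B \<omega> * W j \<omega> \<partial>M)"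
  using jn
proof (induction j rule: inc_induct)
  have WM: "W k \<in> borel_measurable M" for k using measurable_from_subalg[OF sub meas] .
  have HM: "B \<in> sets (H k) \<Longrightarrow> B \<in> sets M" for B k using sub[of k] unfolding subalgebra_def by auto
  have spH: "space (H k) = space M" for k using sub[of k] unfolding subalgebra_def by auto
  have setH: "{\<omega>\<in>space M. eps \<le> W k \<omega>} \<in> sets (H k)" "{\<omega>\<in>space M. W k \<omega> < eps} \<in> sets (H k)" for k
  proof -
    have [measurable]: "W k \<in> borel_measurable (H k)" by (rule meas)
    have "{\<omega>\<in>space (H k). eps \<le> W k \<omega>} \<in> sets (H k)" "{\<omega>\<in>space (H k). W k \<omega> < eps} \<in> sets (H k)"
      by measurable
    then show "{\<omega>\<in>space M. eps \<le> W k \<omega>} \<in> sets (H k)" "{\<omega>\<in>space M. W k \<omega> < eps} \<in> sets (H k)"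
      by (simp_all add: spH)
  qed
  interpret prob_space M by (rule M)
  {
    case base
    show ?case
    proof
      fix B assume B: "B \<in> sets (H n)"
      have "{\<omega>\<in>space M. \<exists>i. n \<le> i \<and> i \<le> n \<and> eps \<le> W i \<omega>} = {\<omega>\<in>space M. eps \<le> W n \<omega>}"
        by auto
      note eqA = this
      have S: "B \<inter> {\<omega>\<in>space M. eps \<le> W n \<omega>} \<in> sets M"
        using HM[OF B] HM[OF setH(1)] by blast
      have "eps * measure M (B \<inter> {\<omega>\<in>space M. eps \<le> W n \<omega>})
          \<le> (\<integral>\<omega>. indicator (B \<inter> {\<omega>\<in>space M. eps \<le> W n \<omega>}) \<omega> * W n \<omega> \<partial>M)"
        using eps by (intro ind_bound[OF M S _ nn int]) auto
      also have "\<dots> \<le> (\<integral>\<omega>. indicator B \<omega> * W n \<omega> \<partial>M)"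
      proof (rule integral_mono)
        show "integrable M (\<lambda>\<omega>. indicator (B \<inter> {\<omega>\<in>space M. eps \<le> W n \<omega>}) \<omega> * W n \<omega>)"
          using integrable_mult_indicator[OF S int[of n]] by simp
        show "integrable M (\<lambda>\<omega>. indicator B \<omega> * W n \<omega>)"
          using integrable_mult_indicator[OF HM[OF B] int[of n]] by simp
        fix \<omega> assume "\<omega> \<in> space M"
        then show "indicator (B \<inter> {\<omega>\<in>space M. eps \<le> W n \<omega>}) \<omega> * W n \<omega> \<le> indicator B \<omega> * W n \<omega>"
          using nn[of \<omega> n] by (auto split: split_indicator)
      qed
      finally show "eps * measure M (B \<inter> {\<omega>\<in>space M. \<exists>i. n \<le> i \<and> i \<le> n \<and> eps \<le> W i \<omega>})
           \<le> (\<integral>\<omega>. indicator B \<omega> * W n \<omega> \<partial>M)" unfolding eqA .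
    qed
  }
  {
    case (step m)
    show ?case
    proof
      fix B assume B: "B \<in> sets (H m)"
      define B1 where "B1 = B \<inter> {\<omega>\<in>space M. eps \<le> W m \<omega>}"
      define B2 where "B2 = B \<inter> {\<omega>\<in>space M. W m \<omega> < eps}"
      define A where "A = {\<omega>\<in>space M. \<exists>i. m \<le> i \<and> i \<le> n \<and> eps \<le> W i \<omega>}"
      define A' where "A' = {\<omega>\<in>space M. \<exists>i. Suc m \<le> i \<and> i \<le> n \<and> eps \<le> W i \<omega>}"
      have B1H: "B1 \<in> sets (H m)" unfolding B1_def using B setH(1)[of m] by blast
      have B2H: "B2 \<in> sets (H m)" unfolding B2_def using B setH(2)[of m] by blast
      have B2H': "B2 \<in> sets (H (Suc m))" using B2H mono by blast
      have A'M: "A' \<in> sets M" unfolding A'_def using WM by measurable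
      have AM: "A \<in> sets M" unfolding A_def using WM by measurable
      have sub1: "B \<inter> A \<subseteq> B1 \<union> (B2 \<inter> A')"
        unfolding A_def A'_def B1_def B2_def
        by (auto, metis Suc_le_eq le_neq_implies_less not_less)
      have "measure M (B \<inter> A) \<le> measure M (B1 \<union> (B2 \<inter> A'))"
        using sub1 HM[OF B1H] HM[OF B2H] A'M by (intro finite_measure_mono) auto
      also have "\<dots> \<le> measure M B1 + measure M (B2 \<inter> A')"
        using HM[OF B1H] HM[OF B2H] A'M by (intro measure_Un_le) auto
      finally have m1: "eps * measure M (B \<inter> A) \<le> eps * measure M B1 + eps * measure M (B2 \<inter> A')"
        using eps mult_left_mono[of "measure M (B \<inter> A)" "measure M B1 + measure M (B2 \<inter> A')" eps] by (simp add: distrib_left)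
      have m2: "eps * measure M B1 \<le> (\<integral>\<omega>. indicator B1 \<omega> * W m \<omega> \<partial>M)"
        using eps by (intro ind_bound[OF M HM[OF B1H] _ nn int]) (auto simp: B1_def)
      have "B2 \<inter> A' = B2 \<inter> {\<omega>\<in>space M. \<exists>i. Suc m \<le> i \<and> i \<le> n \<and> eps \<le> W i \<omega>}"
        unfolding A'_def ..
      then have m3: "eps * measure M (B2 \<inter> A') \<le> (\<integral>\<omega>. indicator B2 \<omega> * W (Suc m) \<omega> \<partial>M)"
        using step.IH B2H' by simp
      have m4: "(\<integral>\<omega>. indicator B2 \<omega> * W (Suc m) \<omega> \<partial>M) \<le> (\<integral>\<omega>. indicator B2 \<omega> * W m \<omega> \<partial>M)"
        using sup[OF _ B2H] step.hyps jK by simp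
      have i1: "integrable M (\<lambda>\<omega>. indicator B1 \<omega> * W m \<omega>)"
        using integrable_mult_indicator[OF HM[OF B1H] int[of m]] by simp
      have i2: "integrable M (\<lambda>\<omega>. indicator B2 \<omega> * W m \<omega>)"
        using integrable_mult_indicator[OF HM[OF B2H] int[of m]] by simp
      have "(\<integral>\<omega>. indicator B1 \<omega> * W m \<omega> \<partial>M) + (\<integral>\<omega>. indicator B2 \<omega> * W m \<omega> \<partial>M)
          = (\<integral>\<omega>. indicator B1 \<omega> * W m \<omega> + indicator B2 \<omega> * W m \<omega> \<partial>M)"
        using i1 i2 by simp
      also have "\<dots> = (\<integral>\<omega>. indicator B \<omega> * W m \<omega> \<partial>M)"
        by (rule Bochner_Integration.integral_cong[OF refl]) (auto simp: B1_def B2_def split: split_indicator)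
      finally have m5: "(\<integral>\<omega>. indicator B1 \<omega> * W m \<omega> \<partial>M) + (\<integral>\<omega>. indicator B2 \<omega> * W m \<omega> \<partial>M)
          = (\<integral>\<omega>. indicator B \<omega> * W m \<omega> \<partial>M)" .
      show "eps * measure M (B \<inter> {\<omega>\<in>space M. \<exists>i. m \<le> i \<and> i \<le> n \<and> eps \<le> W i \<omega>})
           \<le> (\<integral>\<omega>. indicator B \<omega> * W m \<omega> \<partial>M)"
        using m1 m2 m3 m4 m5 unfolding A_def by linarith
    qed
  }
qed

lemma ville_ae:
  fixes M :: "'a measure" and H :: "nat \<Rightarrow> 'a measure" and W :: "nat \<Rightarrow> 'a \<Rightarrow> real"
  assumes M: "prob_space M"
    and sub: "\<And>k. subalgebra M (H k)"
    and mono: "\<And>k. sets (H k) \<subseteq> sets (H (Suc k))"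
    and meas: "\<And>k. W k \<in> borel_measurable (H k)"
    and nn: "\<And>k \<omega>. \<omega> \<in> space M \<Longrightarrow> 0 \<le> W k \<omega>"
    and int: "\<And>k. integrable M (W k)"
    and sup: "\<And>k B. k \<ge> K \<Longrightarrow> B \<in> sets (H k) \<Longrightarrow>
        (\<integral>\<omega>. indicator B \<omega> * W (Suc k) \<omega> \<partial>M) \<le> (\<integral>\<omega>. indicator B \<omega> * W k \<omega> \<partial>M)"
    and lim: "(\<lambda>k. \<integral>\<omega>. W k \<omega> \<partial>M) \<longlonglongrightarrow> 0"
  shows "AE \<omega> in M. (\<lambda>k. W k \<omega>) \<longlonglongrightarrow> 0"
proof -
  interpret prob_space M by (rule M)
  have WM[measurable]: "W k \<in> borel_measurable M" for k using measurable_from_subalg[OF sub meas] .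
  have spH: "space (H k) = space M" for k using sub[of k] unfolding subalgebra_def by auto
  have intnn: "0 \<le> (\<integral>\<omega>. W k \<omega> \<partial>M)" for k using nn by (intro Bochner_Integration.integral_nonneg) auto
  have one: "AE \<omega> in M. \<exists>k. \<forall>i\<ge>k. W i \<omega> < eps" if eps: "0 < eps" for eps
  proof -
    have U: "eps * measure M {\<omega>\<in>space M. \<exists>i\<ge>k. eps \<le> W i \<omega>} \<le> (\<integral>\<omega>. W k \<omega> \<partial>M)" if k: "k \<ge> K" for k
    proof -
      define A where "A n = {\<omega>\<in>space M. \<exists>i. k \<le> i \<and> i \<le> n \<and> eps \<le> W i \<omega>}" for n
      have AM: "range A \<subseteq> sets M" unfolding A_def by auto
      have inc: "incseq A" unfolding A_def incseq_def by fastforce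
      have UA: "(\<Union>n. A n) = {\<omega>\<in>space M. \<exists>i\<ge>k. eps \<le> W i \<omega>}" unfolding A_def by auto
      have bnd: "eps * measure M (A n) \<le> (\<integral>\<omega>. W k \<omega> \<partial>M)" for n
      proof (cases "k \<le> n")
        case True
        have "space M \<in> sets (H k)" using sets.top[of "H k"] spH by simp
        then have "eps * measure M (space M \<inter> A n) \<le> (\<integral>\<omega>. indicator (space M) \<omega> * W k \<omega> \<partial>M)"
          using ville_finite[where M=M and H=H and W=W and K=K and eps=eps and j=k and n=n, OF M sub mono meas nn int sup eps k True] unfolding A_def by blast
        also have "\<dots> = (\<integral>\<omega>. W k \<omega> \<partial>M)"
          by (rule Bochner_Integration.integral_cong[OF refl]) auto
        finally show ?thesis unfolding A_def by (simp add: Int_absorb1)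
      next
        case False
        then have "A n = {}" unfolding A_def by auto
        then show ?thesis using intnn[of k] by simp
      qed
      have "(\<lambda>n. eps * measure M (A n)) \<longlonglongrightarrow> eps * measure M (\<Union>n. A n)"
        by (intro tendsto_intros finite_Lim_measure_incseq AM inc)
      then have "eps * measure M (\<Union>n. A n) \<le> (\<integral>\<omega>. W k \<omega> \<partial>M)"
        by (rule LIMSEQ_le_const2) (use bnd in auto)
      then show ?thesis using UA by simp
    qed
    define S where "S = {\<omega>\<in>space M. \<forall>k. \<exists>i\<ge>k. eps \<le> W i \<omega>}"
    have SM: "S \<in> sets M" unfolding S_def by measurable
    have Sle: "eps * measure M S \<le> (\<integral>\<omega>. W k \<omega> \<partial>M)" if "k \<ge> K" for k
    proof -
      have "measure M S \<le> measure M {\<omega>\<in>space M. \<exists>i\<ge>k. eps \<le> W i \<omega>}"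
        unfolding S_def by (intro finite_measure_mono) auto
      then show ?thesis using U[OF that] eps mult_left_mono[of "measure M S" "measure M {\<omega>\<in>space M. \<exists>i\<ge>k. eps \<le> W i \<omega>}" eps] by linarith
    qed
    have "eps * measure M S \<le> 0"
    proof (rule LIMSEQ_le_const[OF lim])
      show "\<exists>N. \<forall>n\<ge>N. eps * measure M S \<le> (\<integral>\<omega>. W n \<omega> \<partial>M)" using Sle by blast
    qed
    then have "measure M S = 0" using eps measure_nonneg[of M S]
      by (simp add: mult_le_0_iff)
    then have "S \<in> null_sets M" using SM by (simp add: emeasure_eq_measure null_sets_def)
    then show ?thesis
      by (rule AE_I') (auto simp: S_def not_less)
  qed
  have "AE \<omega> in M. \<forall>m::nat. \<exists>k. \<forall>i\<ge>k. W i \<omega> < inverse (real (Suc m))"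
    unfolding AE_all_countable using one by simp
  then show ?thesis
  proof (rule AE_mp, intro AE_I2 impI)
    fix \<omega> assume \<omega>: "\<omega> \<in> space M" and h: "\<forall>m::nat. \<exists>k. \<forall>i\<ge>k. W i \<omega> < inverse (real (Suc m))"
    show "(\<lambda>k. W k \<omega>) \<longlonglongrightarrow> 0"
    proof (rule LIMSEQ_I)
      fix r :: real assume "0 < r"
      then obtain m where m: "inverse (real (Suc m)) < r" using reals_Archimedean by blast
      obtain k where "\<forall>i\<ge>k. W i \<omega> < inverse (real (Suc m))" using h by blast
      then show "\<exists>no. \<forall>n\<ge>no. norm (W n \<omega> - 0) < r"
        using m nn[OF \<omega>] by (metis abs_of_nonneg diff_zero less_trans real_norm_def)
    qed
  qed
qed

lemma line_deriv:
  fixes f :: "'v::euclidean_space \<Rightarrow> real"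
  assumes fd: "(f has_derivative (\<lambda>h. g \<bullet> h)) (at x)"
  shows "((\<lambda>t. f (x + t *\<^sub>R v)) has_real_derivative (g \<bullet> v)) (at 0)"
proof -
  have l: "((\<lambda>t. x + t *\<^sub>R v) has_derivative (\<lambda>t. t *\<^sub>R v)) (at 0)"
    by (auto intro!: derivative_eq_intros)
  have fd': "(f has_derivative (\<lambda>h. g \<bullet> h)) (at (x + 0 *\<^sub>R v))" using fd by simp
  have "((\<lambda>t. f (x + t *\<^sub>R v)) has_derivative (\<lambda>t. g \<bullet> (t *\<^sub>R v))) (at 0)"
    using has_derivative_compose[OF l fd'] by simp
  moreover have "(\<lambda>t. g \<bullet> (t *\<^sub>R v)) = (*) (g \<bullet> v)" by (auto simp: fun_eq_iff)
  ultimately show ?thesis unfolding has_field_derivative_def by simp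
qed

lemma first_order:
  fixes f :: "'v::euclidean_space \<Rightarrow> real"
  assumes fd: "(f has_derivative (\<lambda>h. g \<bullet> h)) (at x)"
    and sc: "strongly_convex_on X f eta" and x: "x \<in> X" and y: "y \<in> X"
  shows "g \<bullet> (y - x) \<le> f y - f x - eta/2 * (norm (x - y))\<^sup>2"
proof (rule ccontr)
  assume neg: "\<not> ?thesis"
  define c where "c = (norm (x - y))\<^sup>2"
  define phi where "phi t = f (x + t *\<^sub>R (y - x)) + (- (1-t) * f x - t * f y + eta/2*t*(1-t)*c)" for t
  have p: "((\<lambda>t. - (1-t) * f x - t * f y + eta/2*t*(1-t)*c) has_real_derivative (f x - f y + eta/2*c)) (at 0)"
    by (auto intro!: derivative_eq_intros)
  have "(phi has_real_derivative (g \<bullet> (y - x) + (f x - f y + eta/2*c))) (at 0)"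
    unfolding phi_def[abs_def] by (rule DERIV_add[OF line_deriv[OF fd] p])
  moreover have "0 < g \<bullet> (y - x) + (f x - f y + eta/2*c)" using neg unfolding c_def by simp
  ultimately obtain d where d: "d > 0" "\<And>h. h > 0 \<Longrightarrow> h < d \<Longrightarrow> phi 0 < phi (0 + h)"
    using DERIV_pos_inc_right by blast
  define h where "h = min (d/2) (1/2)"
  have h: "0 < h" "h < d" "h \<le> 1" using d unfolding h_def by auto
  have "phi 0 < phi h" using d(2)[OF h(1,2)] by simp
  moreover have "phi 0 = 0" unfolding phi_def by simp
  moreover have "phi h \<le> 0"
  proof -
    have eq: "x + h *\<^sub>R (y - x) = (1 - h) *\<^sub>R x + h *\<^sub>R y" by (simp add: algebra_simps)
    have "f ((1 - h) *\<^sub>R x + h *\<^sub>R y) \<le> (1 - h) * f x + h * f y - eta / 2 * h * (1 - h) * c"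
      using sc x y h unfolding strongly_convex_on_def c_def by auto
    then show ?thesis unfolding phi_def eq by (simp add: algebra_simps)
  qed
  ultimately show False by simp
qed

lemma optimality:
  fixes f :: "'v::euclidean_space \<Rightarrow> real"
  assumes fd: "(f has_derivative (\<lambda>h. g \<bullet> h)) (at x)"
    and cX: "convex X" and x: "x \<in> X" and y: "y \<in> X" and min: "\<forall>z\<in>X. f x \<le> f z"
  shows "0 \<le> g \<bullet> (y - x)"
proof (rule ccontr)
  assume "\<not> ?thesis"
  then have "g \<bullet> (y - x) < 0" by simp
  then obtain d where d: "d > 0" "\<And>h. h > 0 \<Longrightarrow> h < d \<Longrightarrow> f (x + 0 *\<^sub>R (y - x)) > f (x + (0 + h) *\<^sub>R (y - x))"
    using DERIV_neg_dec_right[OF line_deriv[OF fd, of "y - x"]] by blast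
  define h where "h = min (d/2) (1/2)"
  have h: "0 < h" "h < d" "h \<le> 1" using d unfolding h_def by auto
  have eq: "x + h *\<^sub>R (y - x) = (1 - h) *\<^sub>R x + h *\<^sub>R y" by (simp add: algebra_simps)
  have "x + h *\<^sub>R (y - x) \<in> X" unfolding eq using convexD_alt[OF cX x y] h by simp
  then have "f x \<le> f (x + h *\<^sub>R (y - x))" using min by blast
  moreover have "f x > f (x + h *\<^sub>R (y - x))" using d(2)[OF h(1,2)] by simp
  ultimately show False by simp
qed

lemma strong_mono:
  fixes f :: "'v::euclidean_space \<Rightarrow> real"
  assumes fd: "\<forall>z\<in>X. (f has_derivative (\<lambda>h. gf z \<bullet> h)) (at z)"
    and sc: "strongly_convex_on X f eta" and x: "x \<in> X" and y: "y \<in> X"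
  shows "eta * (norm (x - y))\<^sup>2 \<le> (x - y) \<bullet> (gf x - gf y)"
proof -
  have a: "gf x \<bullet> (y - x) \<le> f y - f x - eta/2 * (norm (x - y))\<^sup>2"
    using first_order[OF _ sc x y] fd x by blast
  have b: "gf y \<bullet> (x - y) \<le> f x - f y - eta/2 * (norm (y - x))\<^sup>2"
    using first_order[OF _ sc y x] fd y by blast
  have "norm (y - x) = norm (x - y)" by (rule norm_minus_commute)
  moreover have "(x - y) \<bullet> (gf x - gf y) = - (gf x \<bullet> (y - x)) - gf y \<bullet> (x - y)"
    by (simp add: inner_diff inner_commute algebra_simps)
  ultimately show ?thesis using a b by simp
qed

lemma norm_sq_diff:
  fixes u v :: "'v::real_inner"
  shows "(norm (u - t *\<^sub>R v))\<^sup>2 = (norm u)\<^sup>2 - 2*t*(u \<bullet> v) + t^2 * (norm v)\<^sup>2"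
proof -
  have "(norm (u - t *\<^sub>R v))\<^sup>2 = (u - t *\<^sub>R v) \<bullet> (u - t *\<^sub>R v)" by (rule power2_norm_eq_inner)
  also have "\<dots> = u \<bullet> u - 2*t*(u \<bullet> v) + t^2 * (v \<bullet> v)"
    by (simp add: inner_diff_left inner_diff_right inner_commute algebra_simps power2_eq_square)
  finally show ?thesis by (simp add: power2_norm_eq_inner)
qed

lemma fixed_point:
  fixes xs g :: "'v::euclidean_space"
  assumes cX: "convex X" and clX: "closed X" and xs: "xs \<in> X"
    and opt: "\<forall>y\<in>X. 0 \<le> g \<bullet> (y - xs)" and gam: "0 \<le> gam"
  shows "closest_point X (xs - gam *\<^sub>R g) = xs"
proof -
  have "\<forall>y\<in>X. dist (xs - gam *\<^sub>R g) xs \<le> dist (xs - gam *\<^sub>R g) y"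
  proof
    fix y assume y: "y \<in> X"
    have "(dist (xs - gam *\<^sub>R g) y)\<^sup>2 = (norm ((y - xs) - (-gam) *\<^sub>R g))\<^sup>2"
      by (simp add: dist_norm norm_minus_commute algebra_simps)
    also have "\<dots> = (norm (y - xs))\<^sup>2 + 2 * gam * ((y - xs) \<bullet> g) + (-gam)^2 * (norm g)\<^sup>2"
      using norm_sq_diff[of "y - xs" "-gam" g] by simp
    also have "\<dots> \<ge> (-gam)^2 * (norm g)\<^sup>2"
      using opt y gam by (simp add: inner_commute)
    also have "(-gam)^2 * (norm g)\<^sup>2 = (norm (gam *\<^sub>R g))\<^sup>2" by (simp add: power_mult_distrib)
    finally have "(norm (gam *\<^sub>R g))\<^sup>2 \<le> (dist (xs - gam *\<^sub>R g) y)\<^sup>2" .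
    moreover have "dist (xs - gam *\<^sub>R g) xs = norm (gam *\<^sub>R g)" by (simp add: dist_norm)
    ultimately show "dist (xs - gam *\<^sub>R g) xs \<le> dist (xs - gam *\<^sub>R g) y"
      by (metis power2_le_imp_le zero_le_dist)
  qed
  then show ?thesis using closest_point_unique[OF cX clX xs] by simp
qed

lemma contraction:
  fixes x xs gx gs :: "'v::euclidean_space"
  assumes sm: "eta * (norm (x - xs))\<^sup>2 \<le> (x - xs) \<bullet> (gx - gs)"
    and lip: "norm (gx - gs) \<le> L * norm (x - xs)" and gam: "0 \<le> gam" and L: "0 \<le> L"
  shows "(norm (x - xs - gam *\<^sub>R (gx - gs)))\<^sup>2 \<le> (1 - 2*gam*eta + gam^2*L^2) * (norm (x - xs))\<^sup>2"
proof -
  have "(norm (x - xs - gam *\<^sub>R (gx - gs)))\<^sup>2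
      = (norm (x - xs))\<^sup>2 - 2*gam*((x - xs) \<bullet> (gx - gs)) + gam^2 * (norm (gx - gs))\<^sup>2"
    using norm_sq_diff[of "x - xs" gam "gx - gs"] by simp
  also have "\<dots> \<le> (norm (x - xs))\<^sup>2 - 2*gam*(eta * (norm (x - xs))\<^sup>2) + gam^2 * (L * norm (x - xs))\<^sup>2"
  proof -
    have "2*gam*(eta * (norm (x - xs))\<^sup>2) \<le> 2*gam*((x - xs) \<bullet> (gx - gs))"
      using sm gam by (intro mult_left_mono) auto
    moreover have "(norm (gx - gs))\<^sup>2 \<le> (L * norm (x - xs))\<^sup>2"
      using lip by (intro power_mono) auto
    then have "gam^2 * (norm (gx - gs))\<^sup>2 \<le> gam^2 * (L * norm (x - xs))\<^sup>2"
      by (intro mult_left_mono) auto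
    ultimately show ?thesis by linarith
  qed
  also have "\<dots> = (1 - 2*gam*eta + gam^2*L^2) * (norm (x - xs))\<^sup>2"
    by (simp add: algebra_simps power_mult_distrib)
  finally show ?thesis .
qed

definition grid :: "nat \<Rightarrow> 'v::euclidean_space \<Rightarrow> 'v" where
  "grid m v = (\<Sum>b\<in>Basis. (real_of_int \<lfloor>real (Suc m) * (v \<bullet> b)\<rfloor> / real (Suc m)) *\<^sub>R b)"

lemma grid_meas[measurable]: "grid m \<in> borel_measurable borel"
  unfolding grid_def by measurable

lemma grid_countable: "countable (range (grid m :: 'v::euclidean_space \<Rightarrow> 'v))"
proof -
  have "range (grid m :: 'v \<Rightarrow> 'v) \<subseteq> (\<lambda>k. \<Sum>b\<in>Basis. (real_of_int (k b) / real (Suc m)) *\<^sub>R b) ` (Basis \<rightarrow>\<^sub>E (UNIV :: int set))"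
  proof
    fix z assume "z \<in> range (grid m :: 'v \<Rightarrow> 'v)"
    then obtain v where v: "z = grid m v" by auto
    let ?k = "restrict (\<lambda>b. \<lfloor>real (Suc m) * (v \<bullet> b)\<rfloor>) Basis"
    have "z = (\<lambda>k. \<Sum>b\<in>Basis. (real_of_int (k b) / real (Suc m)) *\<^sub>R b) ?k"
      unfolding v grid_def by (intro sum.cong) auto
    moreover have "?k \<in> Basis \<rightarrow>\<^sub>E (UNIV :: int set)" by auto
    ultimately show "z \<in> (\<lambda>k. \<Sum>b\<in>Basis. (real_of_int (k b) / real (Suc m)) *\<^sub>R b) ` (Basis \<rightarrow>\<^sub>E (UNIV :: int set))"
      by blast
  qed
  moreover have "countable (Basis \<rightarrow>\<^sub>E (UNIV :: int set))"
    by (intro countable_PiE) auto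
  then have "countable ((\<lambda>k. \<Sum>b\<in>Basis. (real_of_int (k b) / real (Suc m)) *\<^sub>R b) ` (Basis \<rightarrow>\<^sub>E (UNIV :: int set)))"
    by (rule countable_image)
  ultimately show ?thesis by (rule countable_subset)
qed

lemma grid_inner: "b \<in> Basis \<Longrightarrow> grid m v \<bullet> b = real_of_int \<lfloor>real (Suc m) * (v \<bullet> b)\<rfloor> / real (Suc m)"
  unfolding grid_def by (simp add: inner_sum_left inner_Basis if_distrib sum.delta cong: if_cong)

lemma grid_close: "norm (grid m v - v) \<le> real DIM('v) / real (Suc m)" for v :: "'v::euclidean_space"
proof -
  have c: "\<bar>(grid m v - v) \<bullet> b\<bar> \<le> 1 / real (Suc m)" if b: "b \<in> Basis" for b
  proof -
    define a where "a = real (Suc m)"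
    have a: "0 < a" unfolding a_def by simp
    have "(grid m v - v) \<bullet> b = (real_of_int \<lfloor>a * (v \<bullet> b)\<rfloor> - a * (v \<bullet> b)) / a"
      using b a by (simp add: inner_diff_left grid_inner a_def field_simps)
    moreover have "\<bar>real_of_int \<lfloor>a * (v \<bullet> b)\<rfloor> - a * (v \<bullet> b)\<bar> \<le> 1"
      by (smt (verit) of_int_floor_le real_of_int_floor_add_one_gt)
    ultimately show ?thesis using a by (simp add: abs_div_pos divide_right_mono a_def)
  qed
  have "norm (grid m v - v) \<le> (\<Sum>b\<in>Basis. \<bar>(grid m v - v) \<bullet> b\<bar>)" by (rule norm_le_l1)
  also have "\<dots> \<le> (\<Sum>b\<in>(Basis::'v set). 1 / real (Suc m))" by (intro sum_mono c)
  also have "\<dots> = real DIM('v) / real (Suc m)" by simp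
  finally show ?thesis .
qed

lemma grid_lim: "(\<lambda>m. grid m v) \<longlonglongrightarrow> v" for v :: "'v::euclidean_space"
proof -
  have "(\<lambda>m. real DIM('v) / real (Suc m)) \<longlonglongrightarrow> 0"
    using LIMSEQ_Suc[OF lim_const_over_n[of "real DIM('v)"]] by simp
  then have "(\<lambda>m. norm (grid m v - v)) \<longlonglongrightarrow> 0"
    by (rule Lim_null_comparison[rotated]) (intro always_eventually allI, use grid_close in simp)
  then show ?thesis by (simp add: LIM_zero_cancel tendsto_norm_zero_iff)
qed

lemma cara_meas:
  fixes F :: "'v::euclidean_space \<Rightarrow> 's \<Rightarrow> real" and N :: "'a measure" and P :: "'s measure"
  assumes D: "open D"
    and cont: "\<forall>s\<in>space P. continuous_on D (\<lambda>y. F y s)"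
    and meas: "\<forall>y\<in>D. F y \<in> borel_measurable P"
    and y[measurable]: "y \<in> borel_measurable N" and s[measurable]: "s \<in> measurable N P"
  shows "(\<lambda>\<omega>. if y \<omega> \<in> D then F (y \<omega>) (s \<omega>) else 0) \<in> borel_measurable N"
proof (rule borel_measurable_LIMSEQ_real)
  define u where "u m \<omega> = (if y \<omega> \<in> D \<and> grid m (y \<omega>) \<in> D then F (grid m (y \<omega>)) (s \<omega>) else 0)" for m \<omega>
  have Dm[measurable]: "D \<in> sets borel" using D by simp
  show "u m \<in> borel_measurable N" for m
  proof -
    have "(\<lambda>\<omega>. (\<lambda>v \<omega>. if y \<omega> \<in> D \<and> v \<in> D then F v (s \<omega>) else 0) (grid m (y \<omega>)) \<omega>) \<in> borel_measurable N"
    proof (rule measurable_compose_countable'[where I="range (grid m)" and f="\<lambda>v \<omega>. if y \<omega> \<in> D \<and> v \<in> D then F v (s \<omega>) else 0" and g="\<lambda>\<omega>. grid m (y \<omega>)"])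
      fix v :: 'v
      show "(\<lambda>\<omega>. if y \<omega> \<in> D \<and> v \<in> D then F v (s \<omega>) else 0) \<in> borel_measurable N"
      proof (cases "v \<in> D")
        case True
        have [measurable]: "F v \<in> borel_measurable P" using meas True by blast
        show ?thesis by measurable
      next
        case False then show ?thesis by simp
      qed
    next
      show "(\<lambda>\<omega>. grid m (y \<omega>)) \<in> measurable N (count_space (range (grid m)))"
        unfolding measurable_count_space_eq_countable[OF grid_countable]
      proof (intro conjI ballI)
        show "(\<lambda>\<omega>. grid m (y \<omega>)) \<in> space N \<rightarrow> range (grid m)" by auto
        fix a :: 'v assume "a \<in> range (grid m)"
        have "{\<omega>\<in>space N. grid m (y \<omega>) = a} \<in> sets N" by measurable
        then show "(\<lambda>\<omega>. grid m (y \<omega>)) -` {a} \<inter> space N \<in> sets N"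
          by (simp add: vimage_def Int_def conj_commute)
      qed
    next
      show "countable (range (grid m))" by (rule grid_countable)
    qed
    then show ?thesis unfolding u_def[abs_def] .
  qed
  fix \<omega> assume \<omega>: "\<omega> \<in> space N"
  show "(\<lambda>m. u m \<omega>) \<longlonglongrightarrow> (if y \<omega> \<in> D then F (y \<omega>) (s \<omega>) else 0)"
  proof (cases "y \<omega> \<in> D")
    case False then show ?thesis unfolding u_def by simp
  next
    case True
    have sP: "s \<omega> \<in> space P" using measurable_space[OF s \<omega>] .
    have gl: "(\<lambda>m. grid m (y \<omega>)) \<longlonglongrightarrow> y \<omega>" by (rule grid_lim)
    have ev: "eventually (\<lambda>m. grid m (y \<omega>) \<in> D) sequentially"
      using topological_tendstoD[OF gl D True] .
    have "(\<lambda>m. F (grid m (y \<omega>)) (s \<omega>)) \<longlonglongrightarrow> F (y \<omega>) (s \<omega>)"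
      using continuous_on_tendsto_compose[OF cont[rule_format, OF sP] gl True ev] .
    moreover have "eventually (\<lambda>m. F (grid m (y \<omega>)) (s \<omega>) = u m \<omega>) sequentially"
      using ev True unfolding u_def by (auto elim: eventually_mono)
    ultimately show ?thesis using True by (simp add: tendsto_cong)
  qed
qed

lemma grad_meas:
  fixes F :: "'v::euclidean_space \<Rightarrow> 's \<Rightarrow> real" and gF :: "'v \<Rightarrow> 's \<Rightarrow> 'v"
    and N :: "'a measure" and P :: "'s measure"
  assumes D: "open D"
    and cont: "\<forall>s\<in>space P. continuous_on D (\<lambda>y. F y s)"
    and meas: "\<forall>y\<in>D. F y \<in> borel_measurable P"
    and grad: "\<forall>s\<in>space P. \<forall>y\<in>D. ((\<lambda>z. F z s) has_derivative (\<lambda>h. gF y s \<bullet> h)) (at y)"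
    and y[measurable]: "y \<in> borel_measurable N" and s[measurable]: "s \<in> measurable N P"
    and yD: "\<forall>\<omega>\<in>space N. y \<omega> \<in> D"
  shows "(\<lambda>\<omega>. gF (y \<omega>) (s \<omega>)) \<in> borel_measurable N"
proof (rule borel_measurable_euclidean_space[THEN iffD2], intro ballI)
  fix b :: 'v assume b: "b \<in> Basis"
  define Fh where "Fh v \<omega> = (if v \<in> D then F v (s \<omega>) else 0)" for v \<omega>
  define q where "q n \<omega> = real (Suc n) * (Fh (y \<omega> + inverse (real (Suc n)) *\<^sub>R b) \<omega> - Fh (y \<omega>) \<omega>)" for n \<omega>
  show "(\<lambda>\<omega>. gF (y \<omega>) (s \<omega>) \<bullet> b) \<in> borel_measurable N"
  proof (rule borel_measurable_LIMSEQ_real)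
    fix n
    have m1: "(\<lambda>\<omega>. Fh (y \<omega> + inverse (real (Suc n)) *\<^sub>R b) \<omega>) \<in> borel_measurable N"
    proof -
      have [measurable]: "(\<lambda>\<omega>. y \<omega> + inverse (real (Suc n)) *\<^sub>R b) \<in> borel_measurable N" by measurable
      show ?thesis unfolding Fh_def by (rule cara_meas[OF D cont meas, where s=s]) measurable
    qed
    have m2: "(\<lambda>\<omega>. Fh (y \<omega>) \<omega>) \<in> borel_measurable N"
      unfolding Fh_def by (rule cara_meas[OF D cont meas, where s=s]) measurable
    show "q n \<in> borel_measurable N" unfolding q_def[abs_def] using m1 m2 by (intro borel_measurable_times borel_measurable_diff borel_measurable_const)
  next
    fix \<omega> assume \<omega>: "\<omega> \<in> space N"
    have sP: "s \<omega> \<in> space P" using measurable_space[OF s \<omega>] .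
    have yD': "y \<omega> \<in> D" using yD \<omega> by blast
    have d: "((\<lambda>t. F (y \<omega> + t *\<^sub>R b) (s \<omega>)) has_real_derivative (gF (y \<omega>) (s \<omega>) \<bullet> b)) (at 0)"
      by (rule line_deriv) (use grad sP yD' in blast)
    then have dq: "((\<lambda>t. (F (y \<omega> + t *\<^sub>R b) (s \<omega>) - F (y \<omega> + 0 *\<^sub>R b) (s \<omega>)) / (t - 0))
        \<longlongrightarrow> gF (y \<omega>) (s \<omega>) \<bullet> b) (at 0)"
      unfolding has_field_derivative_iff .
    have tl: "filterlim (\<lambda>n. inverse (real (Suc n))) (at 0) sequentially"
      unfolding filterlim_at using LIMSEQ_inverse_real_of_nat by auto
    have c1: "(\<lambda>n. (F (y \<omega> + inverse (real (Suc n)) *\<^sub>R b) (s \<omega>) - F (y \<omega> + 0 *\<^sub>R b) (s \<omega>)) / (inverse (real (Suc n)) - 0))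
        \<longlonglongrightarrow> gF (y \<omega>) (s \<omega>) \<bullet> b"
      by (rule filterlim_compose[OF dq tl])
    have lim0: "(\<lambda>n. y \<omega> + inverse (real (Suc n)) *\<^sub>R b) \<longlonglongrightarrow> y \<omega> + 0 *\<^sub>R b"
      by (intro tendsto_intros LIMSEQ_inverse_real_of_nat)
    have ev: "eventually (\<lambda>n. y \<omega> + inverse (real (Suc n)) *\<^sub>R b \<in> D) sequentially"
      using topological_tendstoD[OF lim0 D] yD' by simp
    have "eventually (\<lambda>n. (F (y \<omega> + inverse (real (Suc n)) *\<^sub>R b) (s \<omega>) - F (y \<omega> + 0 *\<^sub>R b) (s \<omega>)) / (inverse (real (Suc n)) - 0)
        = q n \<omega>) sequentially"
      using ev by eventually_elim (use yD' in \<open>simp add: q_def Fh_def divide_inverse mult.commute\<close>)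
    then show "(\<lambda>n. q n \<omega>) \<longlonglongrightarrow> gF (y \<omega>) (s \<omega>) \<bullet> b"
      using c1 by (rule Lim_transform_eventually[rotated])
  qed
qed

lemma history_gen_pow:
  "{x0 -` A \<inter> space M | A. A \<in> sets borel} \<union> {xi i -` B \<inter> space M | i B. i < k \<and> B \<in> sets S} \<subseteq> Pow (space M)"
  by auto

lemma history_space: "space (history M x0 S xi k) = space M"
  unfolding history_def by (rule space_measure_of[OF history_gen_pow])

lemma history_sets: "sets (history M x0 S xi k) =
   sigma_sets (space M) ({x0 -` A \<inter> space M | A. A \<in> sets borel} \<union> {xi i -` B \<inter> space M | i B. i < k \<and> B \<in> sets S})"
  unfolding history_def by (rule sets_measure_of[OF history_gen_pow])

lemma history_sub:
  assumes "x0 \<in> borel_measurable M" "\<forall>i. xi i \<in> measurable M S"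
  shows "subalgebra M (history M x0 S xi k)"
  unfolding subalgebra_def history_space history_sets
proof (intro conjI refl sets.sigma_sets_subset)
  show "{x0 -` A \<inter> space M | A. A \<in> sets borel} \<union> {xi i -` B \<inter> space M | i B. i < k \<and> B \<in> sets S} \<subseteq> sets M"
    using assms by (auto intro: measurable_sets)
qed

lemma history_mono_le: "k \<le> n \<Longrightarrow> sets (history M x0 S xi k) \<subseteq> sets (history M x0 S xi n)"
  unfolding history_sets by (intro sigma_sets_mono') (blast dest: less_le_trans)

lemma history_mono: "sets (history M x0 S xi k) \<subseteq> sets (history M x0 S xi (Suc k))"
  by (rule history_mono_le) simp

lemma history_x0: "x0 \<in> borel_measurable (history M x0 S xi k)"
proof (rule measurableI)
  fix A :: "'b set" assume "A \<in> sets borel"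
  then show "x0 -` A \<inter> space (history M x0 S xi k) \<in> sets (history M x0 S xi k)"
    unfolding history_sets history_space by (intro sigma_sets.Basic) blast
qed auto

lemma history_xi:
  assumes "xi i \<in> measurable M S" "i < k"
  shows "xi i \<in> measurable (history M x0 S xi k) S"
proof (rule measurableI)
  fix x assume "x \<in> space (history M x0 S xi k)"
  then show "xi i x \<in> space S" using assms measurable_space by (metis history_space)
next
  fix B assume "B \<in> sets S"
  then show "xi i -` B \<inter> space (history M x0 S xi k) \<in> sets (history M x0 S xi k)"
    unfolding history_sets history_space using assms by (intro sigma_sets.Basic) blast
qed

lemma subalg_sigma_finite:
  assumes "prob_space M" "subalgebra M F"
  shows "sigma_finite_subalgebra M F"
proof -
  have "finite_measure_subalgebra M F"
    unfolding finite_measure_subalgebra_def finite_measure_subalgebra_axioms_def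
    using assms prob_space.finite_measure by blast
  then show ?thesis by (rule finite_measure_subalgebra_is_sigma_finite)
qed

lemma prod_le_sq: fixes a b :: real shows "\<bar>a * b\<bar> \<le> a^2 + b^2"
proof -
  have "0 \<le> (\<bar>a\<bar> - \<bar>b\<bar>)^2" by simp
  then have "2 * (\<bar>a\<bar> * \<bar>b\<bar>) \<le> \<bar>a\<bar>^2 + \<bar>b\<bar>^2" by (simp add: power2_diff)
  moreover have "0 \<le> \<bar>a\<bar> * \<bar>b\<bar>" by simp
  ultimately show ?thesis unfolding abs_mult power2_abs by linarith
qed

lemma inner_le_sq: fixes u w :: "'v::real_inner" shows "\<bar>u \<bullet> w\<bar> \<le> (norm u)\<^sup>2 + (norm w)\<^sup>2"
proof -
  have "\<bar>u \<bullet> w\<bar> \<le> norm u * norm w" by (rule Cauchy_Schwarz_ineq2)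
  also have "\<dots> \<le> (norm u)\<^sup>2 + (norm w)\<^sup>2" using prod_le_sq[of "norm u" "norm w"] by simp
  finally show ?thesis .
qed

lemma cross_zero:
  fixes M Fk :: "'a measure" and u w :: "'a \<Rightarrow> 'v::euclidean_space"
  assumes M: "prob_space M" and sub: "subalgebra M Fk"
    and um[measurable]: "u \<in> borel_measurable Fk" and wm[measurable]: "w \<in> borel_measurable M"
    and ui: "integrable M (\<lambda>\<omega>. (norm (u \<omega>))\<^sup>2)" and wi: "integrable M (\<lambda>\<omega>. (norm (w \<omega>))\<^sup>2)"
    and mean: "\<forall>b\<in>Basis. AE \<omega> in M. real_cond_exp M Fk (\<lambda>\<omega>. w \<omega> \<bullet> b) \<omega> = 0"
    and B: "B \<in> sets Fk"
  shows "integrable M (\<lambda>\<omega>. indicator B \<omega> * (u \<omega> \<bullet> w \<omega>))"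
    "(\<integral>\<omega>. indicator B \<omega> * (u \<omega> \<bullet> w \<omega>) \<partial>M) = 0"
proof -
  interpret sigma_finite_subalgebra M Fk using subalg_sigma_finite[OF M sub] .
  have umM[measurable]: "u \<in> borel_measurable M" by (rule measurable_from_subalg[OF sub um])
  have BM[measurable]: "B \<in> sets M" using B sub unfolding subalgebra_def by auto
  have [measurable]: "B \<in> sets Fk" by (rule B)
  have bnd: "integrable M (\<lambda>\<omega>. (norm (u \<omega>))\<^sup>2 + (norm (w \<omega>))\<^sup>2)" using ui wi by simp
  have ib: "integrable M (\<lambda>\<omega>. (indicator B \<omega> * (u \<omega> \<bullet> b)) * (w \<omega> \<bullet> b))" if b: "b \<in> Basis" for b
  proof (rule Bochner_Integration.integrable_bound[OF bnd])
    show "(\<lambda>\<omega>. (indicator B \<omega> * (u \<omega> \<bullet> b)) * (w \<omega> \<bullet> b)) \<in> borel_measurable M" by measurable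
    show "AE \<omega> in M. norm (indicator B \<omega> * (u \<omega> \<bullet> b) * (w \<omega> \<bullet> b)) \<le> norm ((norm (u \<omega>))\<^sup>2 + (norm (w \<omega>))\<^sup>2)"
    proof (intro AE_I2)
      fix \<omega>
      have "\<bar>indicator B \<omega> * (u \<omega> \<bullet> b) * (w \<omega> \<bullet> b)\<bar> \<le> \<bar>(u \<omega> \<bullet> b) * (w \<omega> \<bullet> b)\<bar>"
        by (auto split: split_indicator)
      also have "\<dots> \<le> norm (u \<omega>) * norm (w \<omega>)"
        unfolding abs_mult using Basis_le_norm[OF b] by (intro mult_mono) auto
      also have "\<dots> \<le> (norm (u \<omega>))\<^sup>2 + (norm (w \<omega>))\<^sup>2" using prod_le_sq[of "norm (u \<omega>)" "norm (w \<omega>)"] by simp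
      finally show "norm (indicator B \<omega> * (u \<omega> \<bullet> b) * (w \<omega> \<bullet> b)) \<le> norm ((norm (u \<omega>))\<^sup>2 + (norm (w \<omega>))\<^sup>2)"
        by simp
    qed
  qed
  have zb: "(\<integral>\<omega>. (indicator B \<omega> * (u \<omega> \<bullet> b)) * (w \<omega> \<bullet> b) \<partial>M) = 0" if b: "b \<in> Basis" for b
  proof -
    have "(\<integral>\<omega>. (indicator B \<omega> * (u \<omega> \<bullet> b)) * (w \<omega> \<bullet> b) \<partial>M)
        = (\<integral>\<omega>. (indicator B \<omega> * (u \<omega> \<bullet> b)) * real_cond_exp M Fk (\<lambda>\<omega>. w \<omega> \<bullet> b) \<omega> \<partial>M)"
      by (rule real_cond_exp_intg(2)[symmetric]) (use ib[OF b] in auto)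
    also have "\<dots> = (\<integral>\<omega>. 0 \<partial>M)"
      by (rule integral_cong_AE) (use mean b in auto)
    finally show ?thesis by simp
  qed
  have eq: "(\<lambda>\<omega>. indicator B \<omega> * (u \<omega> \<bullet> w \<omega>)) = (\<lambda>\<omega>. \<Sum>b\<in>Basis. (indicator B \<omega> * (u \<omega> \<bullet> b)) * (w \<omega> \<bullet> b))"
  proof
    fix \<omega>
    have "u \<omega> \<bullet> w \<omega> = (\<Sum>b\<in>Basis. (u \<omega> \<bullet> b) * (w \<omega> \<bullet> b))" by (rule euclidean_inner)
    then show "indicator B \<omega> * (u \<omega> \<bullet> w \<omega>) = (\<Sum>b\<in>Basis. (indicator B \<omega> * (u \<omega> \<bullet> b)) * (w \<omega> \<bullet> b))"
      by (simp add: sum_distrib_left mult.assoc)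
  qed
  show "integrable M (\<lambda>\<omega>. indicator B \<omega> * (u \<omega> \<bullet> w \<omega>))"
    unfolding eq using ib by auto
  show "(\<integral>\<omega>. indicator B \<omega> * (u \<omega> \<bullet> w \<omega>) \<partial>M) = 0"
    unfolding eq using ib zb by (simp add: Bochner_Integration.integral_sum)
qed

lemma wsq:
  fixes M Fk :: "'a measure" and w :: "'a \<Rightarrow> 'v::euclidean_space"
  assumes M: "prob_space M" and sub: "subalgebra M Fk"
    and wm[measurable]: "w \<in> borel_measurable M"
    and var: "AE \<omega> in M. nn_cond_exp M Fk (\<lambda>\<omega>'. ennreal ((norm (w \<omega>'))\<^sup>2)) \<omega> \<le> ennreal (nu\<^sup>2)"
  shows "integrable M (\<lambda>\<omega>. (norm (w \<omega>))\<^sup>2)"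
    "\<And>B. B \<in> sets Fk \<Longrightarrow> (\<integral>\<omega>. indicator B \<omega> * (norm (w \<omega>))\<^sup>2 \<partial>M) \<le> nu\<^sup>2 * measure M B"
proof -
  interpret sigma_finite_subalgebra M Fk using subalg_sigma_finite[OF M sub] .
  interpret prob_space M by (rule M)
  have nnb: "(\<integral>\<^sup>+\<omega>. indicator B \<omega> * ennreal ((norm (w \<omega>))\<^sup>2) \<partial>M) \<le> ennreal (nu\<^sup>2) * emeasure M B"
    if B: "B \<in> sets Fk" for B
  proof -
    have [measurable]: "B \<in> sets Fk" by (rule B)
    have BM: "B \<in> sets M" using B sub unfolding subalgebra_def by auto
    have "(\<integral>\<^sup>+\<omega>. indicator B \<omega> * ennreal ((norm (w \<omega>))\<^sup>2) \<partial>M)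
        = (\<integral>\<^sup>+\<omega>. indicator B \<omega> * nn_cond_exp M Fk (\<lambda>\<omega>'. ennreal ((norm (w \<omega>'))\<^sup>2)) \<omega> \<partial>M)"
      by (rule nn_cond_exp_intg[symmetric]) auto
    also have "\<dots> \<le> (\<integral>\<^sup>+\<omega>. ennreal (nu\<^sup>2) * indicator B \<omega> \<partial>M)"
      by (rule nn_integral_mono_AE) (use var in \<open>auto elim!: eventually_mono simp: mult.commute mult_right_mono split: split_indicator\<close>)
    also have "\<dots> = ennreal (nu\<^sup>2) * emeasure M B" using BM by (rule nn_integral_cmult_indicator)
    finally show ?thesis .
  qed
  have fin: "(\<integral>\<^sup>+\<omega>. ennreal ((norm (w \<omega>))\<^sup>2) \<partial>M) \<le> ennreal (nu\<^sup>2)"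
  proof -
    have "(\<integral>\<^sup>+\<omega>. ennreal ((norm (w \<omega>))\<^sup>2) \<partial>M) = (\<integral>\<^sup>+\<omega>. indicator (space M) \<omega> * ennreal ((norm (w \<omega>))\<^sup>2) \<partial>M)"
      by (rule nn_integral_cong) auto
    also have "\<dots> \<le> ennreal (nu\<^sup>2) * emeasure M (space M)"
      using nnb[of "space M"] sub unfolding subalgebra_def by (metis sets.top)
    finally show ?thesis by (simp add: emeasure_space_1)
  qed
  show int: "integrable M (\<lambda>\<omega>. (norm (w \<omega>))\<^sup>2)"
  proof (rule integrableI_bounded)
    show "(\<integral>\<^sup>+\<omega>. ennreal (norm ((norm (w \<omega>))\<^sup>2)) \<partial>M) < \<infinity>"
      using fin by (simp add: le_less_trans)
  qed measurable
  fix B assume B: "B \<in> sets Fk"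
  have BM: "B \<in> sets M" using B sub unfolding subalgebra_def by auto
  have i2: "integrable M (\<lambda>\<omega>. indicator B \<omega> * (norm (w \<omega>))\<^sup>2)"
    using integrable_mult_indicator[OF BM int] by simp
  have "ennreal (\<integral>\<omega>. indicator B \<omega> * (norm (w \<omega>))\<^sup>2 \<partial>M) = (\<integral>\<^sup>+\<omega>. ennreal (indicator B \<omega> * (norm (w \<omega>))\<^sup>2) \<partial>M)"
    by (rule nn_integral_eq_integral[symmetric]) (use i2 in auto)
  also have "\<dots> = (\<integral>\<^sup>+\<omega>. indicator B \<omega> * ennreal ((norm (w \<omega>))\<^sup>2) \<partial>M)"
    by (rule nn_integral_cong) (auto split: split_indicator)
  also have "\<dots> \<le> ennreal (nu\<^sup>2) * emeasure M B" by (rule nnb[OF B])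
  also have "\<dots> = ennreal (nu\<^sup>2 * measure M B)"
    using BM by (simp add: emeasure_eq_measure ennreal_mult)
  finally show "(\<integral>\<omega>. indicator B \<omega> * (norm (w \<omega>))\<^sup>2 \<partial>M) \<le> nu\<^sup>2 * measure M B"
    by (rule ennreal_le_iff[THEN iffD1, rotated]) simp
qed

lemma norm_diff_sq_le: fixes a b :: "'v::real_normed_vector"
  shows "(norm (a - b))\<^sup>2 \<le> 2 * (norm a)\<^sup>2 + 2 * (norm b)\<^sup>2"
proof -
  have "norm (a - b) \<le> norm a + norm b" by (rule norm_triangle_ineq4)
  then have "(norm (a - b))\<^sup>2 \<le> (norm a + norm b)\<^sup>2" by (intro power_mono) auto
  also have "\<dots> \<le> 2 * (norm a)\<^sup>2 + 2 * (norm b)\<^sup>2"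
  proof -
    have "0 \<le> (norm a - norm b)\<^sup>2" by simp
    then show ?thesis by (simp add: power2_sum power2_diff)
  qed
  finally show ?thesis .
qed

theorem corollary1:
  fixes M :: "'a measure"                        \<comment> \<open>underlying probability space\<close>
    and P :: "'s measure"                        \<comment> \<open>distribution of xi on the sample space Omega\<close>
    and F :: "'v::euclidean_space \<Rightarrow> 's \<Rightarrow> real"
    and gF :: "'v \<Rightarrow> 's \<Rightarrow> 'v"                 \<comment> \<open>gradient of F(.,s)\<close>
    and gf :: "'v \<Rightarrow> 'v"                        \<comment> \<open>gradient of f\<close>
    and D X :: "'v set"
    and L eta nu :: real
    and xstar :: 'v
    and xi :: "nat \<Rightarrow> 'a \<Rightarrow> 's"
    and x :: "nat \<Rightarrow> 'a \<Rightarrow> 'v"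
  assumes M: "prob_space M"
    and P: "prob_space P"
    and D_open: "open D"
    and X_sub: "X \<subseteq> D" and X_ne: "X \<noteq> {}" and X_closed: "closed X" and X_convex: "convex X"
    and F_convex: "\<forall>s\<in>space P. convex_on D (\<lambda>y. F y s)"
    and F_grad: "\<forall>s\<in>space P. \<forall>y\<in>D. ((\<lambda>z. F z s) has_derivative (\<lambda>h. gF y s \<bullet> h)) (at y)"
    and F_int: "\<forall>y\<in>D. integrable P (F y)"
    and f_grad: "\<forall>y\<in>X. ((\<lambda>z. integral\<^sup>L P (F z)) has_derivative (\<lambda>h. gf y \<bullet> h)) (at y)"
    and L_pos: "L > 0"
    and f_lip: "L-lipschitz_on X gf"
    and eta_pos: "eta > 0"
    and f_sconv: "strongly_convex_on X (\<lambda>z. integral\<^sup>L P (F z)) eta"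
    and xstar_in: "xstar \<in> X"
    and xstar_min: "\<forall>y\<in>X. integral\<^sup>L P (F xstar) \<le> integral\<^sup>L P (F y)"
    and nu_pos: "nu > 0"
    and xi_meas: "\<forall>k. xi k \<in> measurable M P"
    and xi_distr: "\<forall>k. distr M P (xi k) = P"
    and x0_meas: "x 0 \<in> borel_measurable M"
    and x0_in: "\<forall>\<omega>\<in>space M. x 0 \<omega> \<in> X"
    and x0_sq: "integrable M (\<lambda>\<omega>. (norm (x 0 \<omega>))\<^sup>2)"
    and w_meas: "\<forall>k. (\<lambda>\<omega>. gF (x k \<omega>) (xi k \<omega>)) \<in> borel_measurable M"
    and iter: "\<forall>k. \<forall>\<omega>\<in>space M. x (Suc k) \<omega> =
        closest_point X (x k \<omega> - gamma_star eta nu (integral\<^sup>L M (\<lambda>\<omega>'. (norm (x 0 \<omega>' - xstar))\<^sup>2)) k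
            *\<^sub>R (gf (x k \<omega>) + (gF (x k \<omega>) (xi k \<omega>) - gf (x k \<omega>))))"
    and w_mean: "\<forall>k. \<forall>b\<in>Basis. AE \<omega> in M.
        real_cond_exp M (history M (x 0) P xi k)
          (\<lambda>\<omega>'. (gF (x k \<omega>') (xi k \<omega>') - gf (x k \<omega>')) \<bullet> b) \<omega> = 0"
    and w_var: "\<forall>k. AE \<omega> in M.
        nn_cond_exp M (history M (x 0) P xi k)
          (\<lambda>\<omega>'. ennreal ((norm (gF (x k \<omega>') (xi k \<omega>') - gf (x k \<omega>')))\<^sup>2)) \<omega> \<le> ennreal (nu\<^sup>2)"
    and small: "eta / (2 * nu\<^sup>2) * integral\<^sup>L M (\<lambda>\<omega>. (norm (x 0 \<omega> - xstar))\<^sup>2) < 1 / L"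
  shows "AE \<omega> in M. (\<lambda>k. x k \<omega>) \<longlonglongrightarrow> xstar"
proof -
  interpret prob_space M by (rule M)
  define e0 where "e0 = integral\<^sup>L M (\<lambda>\<omega>'. (norm (x 0 \<omega>' - xstar))\<^sup>2)"
  define gam where "gam = gamma_star eta nu e0"
  have iter': "\<And>k \<omega>. \<omega> \<in> space M \<Longrightarrow> x (Suc k) \<omega> = closest_point X (x k \<omega> - gam k *\<^sub>R gF (x k \<omega>) (xi k \<omega>))"
    using iter unfolding gam_def e0_def by simp
  have xin: "x k \<omega> \<in> X" if "\<omega> \<in> space M" for k \<omega>
    using that by (cases k) (auto simp: iter' x0_in closest_point_in_set[OF X_closed X_ne])
  show ?thesis
  proof (cases "\<exists>y\<in>X. y \<noteq> xstar")
    case False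
    then have "\<And>k \<omega>. \<omega> \<in> space M \<Longrightarrow> x k \<omega> = xstar" using xin by blast
    then show ?thesis by (intro AE_I2) simp
  next
    case True
    then obtain y0 where y0: "y0 \<in> X" "y0 \<noteq> xstar" by blast
    have sm: "eta * (norm (a - b))\<^sup>2 \<le> (a - b) \<bullet> (gf a - gf b)" if "a \<in> X" "b \<in> X" for a b
      by (rule strong_mono[OF f_grad f_sconv that])
    have lip: "norm (gf a - gf b) \<le> L * norm (a - b)" if "a \<in> X" "b \<in> X" for a b
      using lipschitz_onD[OF f_lip that] by (simp add: dist_norm)
    have etaL: "eta \<le> L"
    proof -
      let ?n = "norm (y0 - xstar)"
      have n: "0 < ?n" using y0 by simp
      have "eta * ?n^2 \<le> (y0 - xstar) \<bullet> (gf y0 - gf xstar)" by (rule sm[OF y0(1) xstar_in])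
      also have "\<dots> \<le> ?n * norm (gf y0 - gf xstar)" by (rule norm_cauchy_schwarz)
      also have "\<dots> \<le> ?n * (L * ?n)" using lip[OF y0(1) xstar_in] n by (intro mult_left_mono) auto
      finally have "eta * ?n^2 \<le> L * ?n^2" by (simp add: power2_eq_square algebra_simps)
      then show ?thesis using n by simp
    qed
    have opt: "\<forall>y\<in>X. 0 \<le> gf xstar \<bullet> (y - xstar)"
      using optimality[OF _ X_convex xstar_in _ xstar_min] f_grad xstar_in by blast
    have fp: "closest_point X (xstar - g *\<^sub>R gf xstar) = xstar" if "0 \<le> g" for g
      by (rule fixed_point[OF X_convex X_closed xstar_in opt that])
    have e0nn: "0 \<le> e0" unfolding e0_def by (intro Bochner_Integration.integral_nonneg) simp
    have g0def: "gam 0 = eta / (2 * nu\<^sup>2) * e0" unfolding gam_def by simp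
    have g0nn: "0 \<le> gamma_star eta nu e0 0" using e0nn eta_pos by simp
    have g0L: "gam 0 < 1 / L" using small unfolding g0def e0_def .
    have g0c: "eta/2 * gamma_star eta nu e0 0 < 1"
    proof -
      have "eta/2 * gam 0 \<le> L/2 * gam 0" using etaL g0nn unfolding gam_def by (intro mult_right_mono) auto
      also have "\<dots> < L/2 * (1/L)" using g0L L_pos by (intro mult_strict_left_mono) auto
      also have "\<dots> = 1/2" using L_pos by simp
      finally have "eta/2 * gam 0 < 1/2" .
      then show ?thesis unfolding gam_def by linarith
    qed
    have gnn: "0 \<le> gam k" for k using gs_basic[OF eta_pos g0nn] g0c unfolding gam_def by auto
    have gle: "gam k \<le> gam 0" for k using gs_basic[OF eta_pos g0nn] g0c unfolding gam_def by auto
    have gstep: "gam (Suc k) = gam k * (1 - eta/2 * gam k)" for k unfolding gam_def by simp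
    have glim: "gam \<longlonglongrightarrow> 0" using gs_lim[OF eta_pos g0nn] g0c unfolding gam_def by auto
    define H where "H k = history M (x 0) P xi k" for k
    have sub: "subalgebra M (H k)" for k unfolding H_def by (rule history_sub[OF x0_meas xi_meas])
    have spH: "space (H k) = space M" for k unfolding H_def by (rule history_space)
    have monoH: "sets (H k) \<subseteq> sets (H (Suc k))" for k unfolding H_def by (rule history_mono)
    have subH: "subalgebra (H (Suc k)) (H k)" for k using monoH spH unfolding subalgebra_def by auto
    have HM: "B \<in> sets (H k) \<Longrightarrow> B \<in> sets M" for B k using sub[of k] unfolding subalgebra_def by auto
    have Fcont: "\<forall>s\<in>space P. continuous_on D (\<lambda>y. F y s)"
      using convex_on_continuous[OF D_open] F_convex by blast
    have Fmeas: "\<forall>y\<in>D. F y \<in> borel_measurable P" using F_int by blast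
    have xH: "x k \<in> borel_measurable (H k)" for k
    proof (induction k)
      case 0 show ?case unfolding H_def by (rule history_x0)
    next
      case (Suc k)
      have a: "x k \<in> borel_measurable (H (Suc k))" by (rule measurable_from_subalg[OF subH Suc])
      have b: "xi k \<in> measurable (H (Suc k)) P" unfolding H_def using xi_meas by (intro history_xi) auto
      have c: "(\<lambda>\<omega>. gF (x k \<omega>) (xi k \<omega>)) \<in> borel_measurable (H (Suc k))"
        by (rule grad_meas[OF D_open Fcont Fmeas F_grad a b]) (use xin X_sub spH in auto)
      have d: "(\<lambda>\<omega>. closest_point X (x k \<omega> - gam k *\<^sub>R gF (x k \<omega>) (xi k \<omega>))) \<in> borel_measurable (H (Suc k))"
        by (rule borel_measurable_continuous_on[OF continuous_on_closest_point[OF X_convex X_closed X_ne]])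
           (use a c in measurable)
      show ?case by (rule measurable_cong[THEN iffD1, OF _ d]) (simp add: iter' spH)
    qed
    have xM[measurable]: "x k \<in> borel_measurable M" for k by (rule measurable_from_subalg[OF sub xH])
    have gfc: "continuous_on UNIV (\<lambda>v. gf (closest_point X v))"
      by (rule continuous_on_compose2[OF lipschitz_on_continuous_on[OF f_lip]
            continuous_on_closest_point[OF X_convex X_closed X_ne]])
         (auto simp: closest_point_in_set[OF X_closed X_ne])
    have gfH: "(\<lambda>\<omega>. gf (x k \<omega>)) \<in> borel_measurable (H k)" for k
    proof -
      have "(\<lambda>\<omega>. gf (closest_point X (x k \<omega>))) \<in> borel_measurable (H k)"
        by (rule borel_measurable_continuous_on[OF gfc xH])
      then show ?thesis
        by (rule measurable_cong[THEN iffD1, rotated]) (simp add: spH xin closest_point_self)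
    qed
    have gfM[measurable]: "(\<lambda>\<omega>. gf (x k \<omega>)) \<in> borel_measurable M" for k by (rule measurable_from_subalg[OF sub gfH])
    have gFM[measurable]: "(\<lambda>\<omega>. gF (x k \<omega>) (xi k \<omega>)) \<in> borel_measurable M" for k using w_meas by blast
    define w where "w k \<omega> = gF (x k \<omega>) (xi k \<omega>) - gf (x k \<omega>)" for k \<omega>
    have wM[measurable]: "w k \<in> borel_measurable M" for k unfolding w_def[abs_def] by measurable
    have wint: "integrable M (\<lambda>\<omega>. (norm (w k \<omega>))\<^sup>2)" for k
      using wsq(1)[OF M sub wM] w_var unfolding w_def H_def by blast
    have wB: "(\<integral>\<omega>. indicator B \<omega> * (norm (w k \<omega>))\<^sup>2 \<partial>M) \<le> nu\<^sup>2 * measure M B" if "B \<in> sets (H k)" for k B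
      using wsq(2)[OF M sub wM _ that] w_var unfolding w_def H_def by blast
    define V where "V k \<omega> = (norm (x k \<omega> - xstar))\<^sup>2" for k \<omega>
    define u where "u k \<omega> = x k \<omega> - xstar - gam k *\<^sub>R (gf (x k \<omega>) - gf xstar)" for k \<omega>
    define fac where "fac k = 1 - 2 * gam k * eta + (gam k)^2 * L^2" for k
    have VM[measurable]: "V k \<in> borel_measurable M" for k unfolding V_def[abs_def] by measurable
    have VH: "V k \<in> borel_measurable (H k)" for k
    proof -
      have [measurable]: "x k \<in> borel_measurable (H k)" by (rule xH)
      show ?thesis unfolding V_def[abs_def] by measurable
    qed
    have uH: "u k \<in> borel_measurable (H k)" for k
    proof -
      have [measurable]: "x k \<in> borel_measurable (H k)" "(\<lambda>\<omega>. gf (x k \<omega>)) \<in> borel_measurable (H k)"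
        by (rule xH, rule gfH)
      show ?thesis unfolding u_def[abs_def] by measurable
    qed
    have uM[measurable]: "u k \<in> borel_measurable M" for k by (rule measurable_from_subalg[OF sub uH])
    have Vnn: "0 \<le> V k \<omega>" for k \<omega> unfolding V_def by simp
    have pu: "(norm (u k \<omega>))\<^sup>2 \<le> fac k * V k \<omega>" if \<omega>: "\<omega> \<in> space M" for k \<omega>
      unfolding u_def fac_def V_def
      by (rule contraction[OF sm[OF xin[OF \<omega>] xstar_in] lip[OF xin[OF \<omega>] xstar_in] gnn]) (use L_pos in simp)
    have puV: "(norm (u k \<omega>))\<^sup>2 \<le> (1 + (gam k)^2 * L^2) * V k \<omega>" if \<omega>: "\<omega> \<in> space M" for k \<omega>
    proof -
      have "fac k * V k \<omega> \<le> (1 + (gam k)^2 * L^2) * V k \<omega>"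
        unfolding fac_def using gnn[of k] eta_pos Vnn[of k \<omega>] by (intro mult_right_mono) auto
      then show ?thesis using pu[OF \<omega>, of k] by linarith
    qed
    have pV: "V (Suc k) \<omega> \<le> (norm (u k \<omega> - gam k *\<^sub>R w k \<omega>))\<^sup>2" if \<omega>: "\<omega> \<in> space M" for k \<omega>
    proof -
      let ?z = "x k \<omega> - gam k *\<^sub>R gF (x k \<omega>) (xi k \<omega>)"
      let ?zs = "xstar - gam k *\<^sub>R gf xstar"
      have "norm (x (Suc k) \<omega> - xstar) = dist (closest_point X ?z) (closest_point X ?zs)"
        using iter'[OF \<omega>] fp[OF gnn[of k]] by (simp add: dist_norm)
      also have "\<dots> \<le> dist ?z ?zs" by (rule closest_point_lipschitz[OF X_convex X_closed X_ne])
      also have "\<dots> = norm (u k \<omega> - gam k *\<^sub>R w k \<omega>)"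
        unfolding dist_norm u_def w_def by (simp add: algebra_simps)
      finally show ?thesis unfolding V_def by (intro power_mono) auto
    qed
    have pkey: "V (Suc k) \<omega> \<le> fac k * V k \<omega> - 2 * gam k * (u k \<omega> \<bullet> w k \<omega>) + (gam k)^2 * (norm (w k \<omega>))\<^sup>2"
      if \<omega>: "\<omega> \<in> space M" for k \<omega>
      using pV[OF \<omega>, of k] pu[OF \<omega>, of k] norm_sq_diff[of "u k \<omega>" "gam k" "w k \<omega>"] by linarith
    have Vint: "integrable M (V k)" for k
    proof (induction k)
      case 0
      have "integrable M (\<lambda>\<omega>. 2 * (norm (x 0 \<omega>))\<^sup>2 + 2 * (norm xstar)\<^sup>2)" using x0_sq by simp
      then show ?case
      proof (rule Bochner_Integration.integrable_bound)
        show "AE \<omega> in M. norm (V 0 \<omega>) \<le> norm (2 * (norm (x 0 \<omega>))\<^sup>2 + 2 * (norm xstar)\<^sup>2)"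
          using norm_diff_sq_le[of "x 0 _" xstar] by (intro AE_I2) (simp add: V_def)
      qed simp
    next
      case (Suc k)
      have "integrable M (\<lambda>\<omega>. 2 * ((1 + (gam k)^2 * L^2) * V k \<omega>) + 2 * ((gam k)^2 * (norm (w k \<omega>))\<^sup>2))"
        using Suc wint by simp
      then show ?case
      proof (rule Bochner_Integration.integrable_bound)
        show "AE \<omega> in M. norm (V (Suc k) \<omega>) \<le> norm (2 * ((1 + (gam k)^2 * L^2) * V k \<omega>) + 2 * ((gam k)^2 * (norm (w k \<omega>))\<^sup>2))"
        proof (intro AE_I2)
          fix \<omega> assume \<omega>: "\<omega> \<in> space M"
          have "V (Suc k) \<omega> \<le> 2 * (norm (u k \<omega>))\<^sup>2 + 2 * (norm (gam k *\<^sub>R w k \<omega>))\<^sup>2"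
            using pV[OF \<omega>, of k] norm_diff_sq_le[of "u k \<omega>" "gam k *\<^sub>R w k \<omega>"] by linarith
          also have "\<dots> \<le> 2 * ((1 + (gam k)^2 * L^2) * V k \<omega>) + 2 * ((gam k)^2 * (norm (w k \<omega>))\<^sup>2)"
            using puV[OF \<omega>, of k] by (simp add: power_mult_distrib)
          finally show "norm (V (Suc k) \<omega>) \<le> norm (2 * ((1 + (gam k)^2 * L^2) * V k \<omega>) + 2 * ((gam k)^2 * (norm (w k \<omega>))\<^sup>2))"
            using Vnn[of "Suc k" \<omega>] by simp
        qed
      qed simp
    qed
    have uint: "integrable M (\<lambda>\<omega>. (norm (u k \<omega>))\<^sup>2)" for k
    proof -
      have "integrable M (\<lambda>\<omega>. (1 + (gam k)^2 * L^2) * V k \<omega>)" using Vint by simp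
      then show ?thesis
      proof (rule Bochner_Integration.integrable_bound)
        show "AE \<omega> in M. norm ((norm (u k \<omega>))\<^sup>2) \<le> norm ((1 + (gam k)^2 * L^2) * V k \<omega>)"
          using puV Vnn by (intro AE_I2) (auto simp: abs_mult)
      qed simp
    qed
    have mean: "\<forall>b\<in>Basis. AE \<omega> in M. real_cond_exp M (H k) (\<lambda>\<omega>. w k \<omega> \<bullet> b) \<omega> = 0" for k
      using w_mean unfolding H_def w_def by blast
    have indV: "integrable M (\<lambda>\<omega>. indicator B \<omega> * V k \<omega>)" if "B \<in> sets M" for B k
      using integrable_mult_indicator[OF that Vint[of k]] by simp
    have mainB: "(\<integral>\<omega>. indicator B \<omega> * V (Suc k) \<omega> \<partial>M)
        \<le> fac k * (\<integral>\<omega>. indicator B \<omega> * V k \<omega> \<partial>M) + (gam k)^2 * nu^2 * measure M B"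
      if B: "B \<in> sets (H k)" for k B
    proof -
      have BM: "B \<in> sets M" by (rule HM[OF B])
      note cz = cross_zero[OF M sub[of k] uH wM uint wint mean B]
      have iw: "integrable M (\<lambda>\<omega>. indicator B \<omega> * (norm (w k \<omega>))\<^sup>2)"
        using integrable_mult_indicator[OF BM wint[of k]] by simp
      have "(\<integral>\<omega>. indicator B \<omega> * V (Suc k) \<omega> \<partial>M)
          \<le> (\<integral>\<omega>. fac k * (indicator B \<omega> * V k \<omega>) - 2 * gam k * (indicator B \<omega> * (u k \<omega> \<bullet> w k \<omega>))
                 + (gam k)^2 * (indicator B \<omega> * (norm (w k \<omega>))\<^sup>2) \<partial>M)"
      proof (rule integral_mono)
        show "integrable M (\<lambda>\<omega>. indicator B \<omega> * V (Suc k) \<omega>)" by (rule indV[OF BM])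
        show "integrable M (\<lambda>\<omega>. fac k * (indicator B \<omega> * V k \<omega>) - 2 * gam k * (indicator B \<omega> * (u k \<omega> \<bullet> w k \<omega>))
                 + (gam k)^2 * (indicator B \<omega> * (norm (w k \<omega>))\<^sup>2))"
          using indV[OF BM, of k] cz(1) iw by simp
        fix \<omega> assume \<omega>: "\<omega> \<in> space M"
        show "indicator B \<omega> * V (Suc k) \<omega> \<le> fac k * (indicator B \<omega> * V k \<omega>) - 2 * gam k * (indicator B \<omega> * (u k \<omega> \<bullet> w k \<omega>))
                 + (gam k)^2 * (indicator B \<omega> * (norm (w k \<omega>))\<^sup>2)"
          using pkey[OF \<omega>, of k] by (auto split: split_indicator)
      qed
      also have "\<dots> = fac k * (\<integral>\<omega>. indicator B \<omega> * V k \<omega> \<partial>M) - 2 * gam k * 0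
                 + (gam k)^2 * (\<integral>\<omega>. indicator B \<omega> * (norm (w k \<omega>))\<^sup>2 \<partial>M)"
        using indV[OF BM, of k] cz iw by simp
      also have "\<dots> \<le> fac k * (\<integral>\<omega>. indicator B \<omega> * V k \<omega> \<partial>M) + (gam k)^2 * (nu^2 * measure M B)"
        using mult_left_mono[OF wB[OF B] zero_le_power2[of "gam k"]] by simp
      finally show ?thesis by (simp add: mult.assoc)
    qed
    have spaceH: "space M \<in> sets (H k)" for k using sets.top[of "H k"] spH by simp
    have indsp: "(\<integral>\<omega>. indicator (space M) \<omega> * f \<omega> \<partial>M) = (\<integral>\<omega>. f \<omega> \<partial>M)" for f :: "'a \<Rightarrow> real"
      by (rule Bochner_Integration.integral_cong[OF refl]) auto
    define e where "e k = (\<integral>\<omega>. V k \<omega> \<partial>M)" for k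
    have enn: "0 \<le> e k" for k unfolding e_def using Vnn by (intro Bochner_Integration.integral_nonneg) auto
    have rec: "e (Suc k) \<le> fac k * e k + (gam k)^2 * nu^2" for k
      using mainB[OF spaceH, of k] unfolding e_def indsp by (simp add: prob_space)
    have elim: "e \<longlonglongrightarrow> 0"
    proof (rule e_lim[OF eta_pos g0nn g0c enn])
      show "e (Suc k) \<le> (1 - 2 * gamma_star eta nu e0 k * eta + (gamma_star eta nu e0 k)\<^sup>2 * L\<^sup>2) * e k +
               (gamma_star eta nu e0 k)\<^sup>2 * nu\<^sup>2" for k
        using rec[of k] unfolding fac_def gam_def .
      assume "gamma_star eta nu e0 0 = 0"
      then have "e0 = 0" using eta_pos nu_pos by simp
      then show "e 0 = 0" unfolding e_def V_def e0_def by simp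
    qed
    obtain K where K: "\<And>k. k \<ge> K \<Longrightarrow> gam k < 2 * eta / L^2"
    proof -
      have "eventually (\<lambda>k. gam k < 2 * eta / L^2) sequentially"
        using order_tendstoD(2)[OF glim] eta_pos L_pos by simp
      then show ?thesis using that unfolding eventually_sequentially by blast
    qed
    have facle: "fac k \<le> 1" if "k \<ge> K" for k
    proof -
      have "gam k * L^2 \<le> 2 * eta" using K[OF that] L_pos by (simp add: field_simps)
      then have "gam k * (gam k * L^2) \<le> gam k * (2 * eta)" using gnn[of k] by (intro mult_left_mono) auto
      then show ?thesis unfolding fac_def by (simp add: power2_eq_square algebra_simps)
    qed
    define C where "C = 2 * nu^2 / eta"
    have Cnn: "0 \<le> C" unfolding C_def using eta_pos by simp
    define W where "W k \<omega> = V k \<omega> + C * gam k" for k \<omega>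
    have intW: "(\<integral>\<omega>. indicator B \<omega> * W k \<omega> \<partial>M) = (\<integral>\<omega>. indicator B \<omega> * V k \<omega> \<partial>M) + C * gam k * measure M B"
      if BM: "B \<in> sets M" for B k
    proof -
      have "(\<integral>\<omega>. indicator B \<omega> * W k \<omega> \<partial>M) = (\<integral>\<omega>. indicator B \<omega> * V k \<omega> + C * gam k * indicator B \<omega> \<partial>M)"
        unfolding W_def by (rule Bochner_Integration.integral_cong[OF refl]) (simp add: algebra_simps)
      also have "\<dots> = (\<integral>\<omega>. indicator B \<omega> * V k \<omega> \<partial>M) + (\<integral>\<omega>. C * gam k * indicator B \<omega> \<partial>M)"
      proof (rule Bochner_Integration.integral_add[OF indV[OF BM]])
        show "integrable M (\<lambda>\<omega>. C * gam k * indicator B \<omega>)"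
          using BM by (intro integrable_mult_right integrable_real_indicator) (auto simp: less_top[symmetric])
      qed
      also have "(\<integral>\<omega>. C * gam k * indicator B \<omega> \<partial>M) = C * gam k * measure M B"
        using BM by (simp add: Int_absorb2 sets.sets_into_space)
      finally show ?thesis .
    qed
    have supW: "(\<integral>\<omega>. indicator B \<omega> * W (Suc k) \<omega> \<partial>M) \<le> (\<integral>\<omega>. indicator B \<omega> * W k \<omega> \<partial>M)"
      if k: "k \<ge> K" and B: "B \<in> sets (H k)" for k B
    proof -
      have BM: "B \<in> sets M" by (rule HM[OF B])
      have I0: "0 \<le> (\<integral>\<omega>. indicator B \<omega> * V k \<omega> \<partial>M)"
        using Vnn by (intro Bochner_Integration.integral_nonneg) auto
      have f1: "fac k * (\<integral>\<omega>. indicator B \<omega> * V k \<omega> \<partial>M) \<le> (\<integral>\<omega>. indicator B \<omega> * V k \<omega> \<partial>M)"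
        using mult_right_mono[OF facle[OF k] I0] by simp
      have cg: "(gam k)^2 * nu^2 + C * gam (Suc k) = C * gam k"
        unfolding gstep C_def using eta_pos by (simp add: field_simps power2_eq_square)
      have "(\<integral>\<omega>. indicator B \<omega> * W (Suc k) \<omega> \<partial>M)
          = (\<integral>\<omega>. indicator B \<omega> * V (Suc k) \<omega> \<partial>M) + C * gam (Suc k) * measure M B" by (rule intW[OF BM])
      also have "\<dots> \<le> fac k * (\<integral>\<omega>. indicator B \<omega> * V k \<omega> \<partial>M) + ((gam k)^2 * nu^2 + C * gam (Suc k)) * measure M B"
        using mainB[OF B] by (simp add: algebra_simps)
      also have "\<dots> \<le> (\<integral>\<omega>. indicator B \<omega> * V k \<omega> \<partial>M) + C * gam k * measure M B"
        using f1 unfolding cg by simp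
      also have "\<dots> = (\<integral>\<omega>. indicator B \<omega> * W k \<omega> \<partial>M)" by (rule intW[OF BM, symmetric])
      finally show ?thesis .
    qed
    have WH: "W k \<in> borel_measurable (H k)" for k
    proof -
      have [measurable]: "V k \<in> borel_measurable (H k)" by (rule VH)
      show ?thesis unfolding W_def[abs_def] by measurable
    qed
    have Wnn: "0 \<le> W k \<omega>" for k \<omega> unfolding W_def using Vnn[of k \<omega>] Cnn gnn[of k] by simp
    have Wint: "integrable M (W k)" for k unfolding W_def[abs_def] using Vint[of k] by simp
    have Wlim: "(\<lambda>k. \<integral>\<omega>. W k \<omega> \<partial>M) \<longlonglongrightarrow> 0"
    proof -
      have "(\<lambda>k. \<integral>\<omega>. W k \<omega> \<partial>M) = (\<lambda>k. e k + C * gam k)"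
        unfolding W_def e_def using Vint by (simp add: prob_space)
      moreover have "(\<lambda>k. e k + C * gam k) \<longlonglongrightarrow> 0 + C * 0" by (intro tendsto_intros elim glim)
      ultimately show ?thesis by simp
    qed
    have "AE \<omega> in M. (\<lambda>k. W k \<omega>) \<longlonglongrightarrow> 0"
      by (rule ville_ae[OF M sub monoH WH Wnn Wint supW Wlim])
    then show ?thesis
    proof (rule AE_mp, intro AE_I2 impI)
      fix \<omega> assume Wl: "(\<lambda>k. W k \<omega>) \<longlonglongrightarrow> 0"
      have "(\<lambda>k. V k \<omega>) \<longlonglongrightarrow> 0"
      proof (rule tendsto_sandwich[OF _ _ tendsto_const Wl])
        show "eventually (\<lambda>k. 0 \<le> V k \<omega>) sequentially" using Vnn by simp
        show "eventually (\<lambda>k. V k \<omega> \<le> W k \<omega>) sequentially"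
          using Cnn gnn by (simp add: W_def)
      qed
      then have "(\<lambda>k. sqrt (V k \<omega>)) \<longlonglongrightarrow> sqrt 0" by (rule tendsto_real_sqrt)
      then have "(\<lambda>k. norm (x k \<omega> - xstar)) \<longlonglongrightarrow> 0" unfolding V_def by simp
      then show "(\<lambda>k. x k \<omega>) \<longlonglongrightarrow> xstar"
        by (simp add: tendsto_norm_zero_iff LIM_zero_cancel)
    qed
  qed
qed

end
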